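(* Let $\phi_+:[0,\infty)\to[0,\infty)$ be increasing and $\phi_-:[0,\infty)\to(-\infty,0]$ be decreasing, and let $F:[0,\infty)\to\mathbb{R}$ be convex and increasing. Suppose $\Delta(l)=\int_0^l\big(\frac{1}{2\phi_+(m)}+\frac{1}{2|\phi_-(m)|}\big)dm$ is finite for each $l>0$ and $\Delta(l)\to\infty$ as $l\to\infty$. Let $\psi_+,\psi_-$ be the right-continuous inverses of $\phi_+,\phi_-$. Let $\nu$ be the probability measure on $[0,\infty)$ with $\bar\nu(l)=\nu([l,\infty))=e^{-\Delta(l)}$, and set $$\Sigma(l)=\frac{1}{\bar\nu(l)}\int_l^\infty F'(m)\,\nu(dm),\qquad \delta(l)=\Sigma(l)-F'(l)\ \text{(where $F'(l)$ exists)},$$ $$A_+(l)=\Sigma(0)+\int_0^l\frac{\delta(m)}{\phi_+(m)}dm,\quad A_-(l)=-\Sigma(0)-\int_0^l\frac{\delta(m)}{|\phi_-(m)|}dm,\quad C(l)=-F(0)+\int_0^l\delta(m)\,dm,$$ and $$H(x)=\begin{cases}\sup_{l>0}\{xA_+(l)-C(l)\},&x>0,\\ F(0),&x=0,\\ \sup_{l>0}\{xA_-(l)-C(l)\},&x<0.\end{cases}$$ Then: $H$ is convex; for $x>0$ the supremum is attained at $l=\psi_+(x)$ and for $x<0$ at $l=\psi_-(x)$; for every $l$, $H'(\phi_+(l-))\le A_+(l)\le H'(\phi_+(l+))$ and $H'(\phi_-(l+))\le A_-(l)\le H'(\phi_-(l-))$; and finally, writing $\Gamma_A(l)=\int_0^l\frac{A_+(m)-A_-(m)}{2}dm$,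 for all $l\ge0$ $$F(l)=\Gamma_A(l)+H(\phi_+(l))-\phi_+(l)A_+(l)=\Gamma_A(l)+H(\phi_-(l))-\phi_-(l)A_-(l).$$
   Context: $F'$ denotes the derivative of $F$, which exists almost everywhere. $\phi_\pm(l\pm)$ denote one-sided limits of $\phi_\pm$ at $l$; in the inequalities $H'(\phi_+(l-))\le A_+(l)\le H'(\phi_+(l+))$ and $H'(\phi_-(l+))\le A_-(l)\le H'(\phi_-(l-))$, the lower bound is the left derivative of the convex function $H$ at the indicated point and the upper bound is its right derivative (they are ordinary derivatives where $H$ is differentiable). *)

theory Defs
  imports "HOL-Analysis.Analysis" "HOL-Probability.Probability"
begin

definition rderiv :: "(real \<Rightarrow> real) \<Rightarrow> real \<Rightarrow> real" where
  "rderiv f x = Lim (at_right x) (\<lambda>y. (f y - f x) / (y - x))"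

text \<open>One-sided derivatives of an extended-real valued function
  (H may take the value +infinity).  Left derivative and right derivative.\<close>
definition ereal_left_deriv :: "(real \<Rightarrow> ereal) \<Rightarrow> real \<Rightarrow> ereal" where
  "ereal_left_deriv f x = Lim (at_left x) (\<lambda>y. (f x - f y) / ereal (x - y))"

definition ereal_right_deriv :: "(real \<Rightarrow> ereal) \<Rightarrow> real \<Rightarrow> ereal" where
  "ereal_right_deriv f x = Lim (at_right x) (\<lambda>y. (f y - f x) / ereal (y - x))"

definition ereal_convex_on :: "real set \<Rightarrow> (real \<Rightarrow> ereal) \<Rightarrow> bool" where
  "ereal_convex_on S f \<longleftrightarrow>
     (\<forall>x\<in>S. \<forall>y\<in>S. \<forall>t::real. 0 \<le> t \<and> t \<le> 1 \<longrightarrow>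
        f ((1 - t) * x + t * y) \<le> ereal (1 - t) * f x + ereal t * f y)"

end

theory Submission
  imports Defs
begin

lemma slope_mono1:
  fixes F :: "real \<Rightarrow> real"
  assumes cF: "convex_on {0..} F" and "0 \<le> x" "x < y" "y < z"
  shows "(F y - F x) / (y - x) \<le> (F z - F x) / (z - x)"
    and "(F z - F x) / (z - x) \<le> (F z - F y) / (z - y)"
proof -
  have I: "x \<in> {0..}" "z \<in> {0..}" using assms by auto
  have a: "(F x - F y) / (x - y) \<le> (F x - F z) / (x - z)"
    using convex_on_slope_le(1)[OF cF I, of y] assms(3,4) by blast
  have b: "(F x - F z) / (x - z) \<le> (F y - F z) / (y - z)"
    using convex_on_slope_le(2)[OF cF I, of y] assms(3,4) by blast
  have e1: "(F x - F y) / (x - y) = (F y - F x) / (y - x)" for x y :: real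
    by (metis minus_diff_eq minus_divide_divide)
  show "(F y - F x) / (y - x) \<le> (F z - F x) / (z - x)" using a by (simp add: e1)
  show "(F z - F x) / (z - x) \<le> (F z - F y) / (z - y)" using b by (simp add: e1)
qed

lemma rderiv_props:
  fixes F :: "real \<Rightarrow> real"
  assumes cF: "convex_on {0..} F" and mF: "mono_on {0..} F" and x: "0 \<le> x"
  shows "((\<lambda>y. (F y - F x) / (y - x)) \<longlongrightarrow> rderiv F x) (at_right x)"
    and "rderiv F x = Inf ((\<lambda>y. (F y - F x) / (y - x)) ` {x<..})"
proof -
  let ?s = "\<lambda>y. (F y - F x) / (y - x)"
  have "(?s \<longlongrightarrow> Inf (?s ` ({x<..} \<inter> UNIV))) (at x within ({x<..} \<inter> UNIV))"
  proof (rule Lim_right_bound[where K=0])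
    fix a b assume "x < a" "a \<le> b"
    then show "?s a \<le> ?s b"
      using slope_mono1(1)[OF cF x, of a b] by (cases "a = b") auto
  next
    fix a assume "x < a"
    then have "F x \<le> F a" using mF x by (auto simp: mono_on_def)
    then show "0 \<le> ?s a" using \<open>x < a\<close> by auto
  qed
  then have L: "(?s \<longlongrightarrow> Inf (?s ` {x<..})) (at_right x)" by simp
  then have "rderiv F x = Inf (?s ` {x<..})"
    unfolding rderiv_def by (intro tendsto_Lim) (auto simp: trivial_limit_at_right_real)
  then show "(?s \<longlongrightarrow> rderiv F x) (at_right x)" "rderiv F x = Inf (?s ` {x<..})" using L by auto
qed

lemma rderiv_bounds:
  fixes F :: "real \<Rightarrow> real"
  assumes cF: "convex_on {0..} F" and mF: "mono_on {0..} F" and x: "0 \<le> x" and xy: "x < y"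
  shows "rderiv F x \<le> (F y - F x) / (y - x)" "(F y - F x) / (y - x) \<le> rderiv F y"
    "0 \<le> rderiv F x"
proof -
  have nn: "0 \<le> (F b - F a) / (b - a)" if "0 \<le> a" "a < b" for a b
  proof -
    have "F a \<le> F b" using mF that by (auto simp: mono_on_def)
    then show ?thesis using that by auto
  qed
  show "rderiv F x \<le> (F y - F x) / (y - x)"
    unfolding rderiv_props(2)[OF cF mF x]
    by (rule cInf_lower) (use xy x nn in \<open>auto intro!: bdd_belowI2[where m=0]\<close>)
  show "0 \<le> rderiv F x"
    unfolding rderiv_props(2)[OF cF mF x]
    by (rule cInf_greatest) (use x nn in auto)
  show "(F y - F x) / (y - x) \<le> rderiv F y"
    using x xy unfolding rderiv_props(2)[OF cF mF, of y, OF order_trans[OF x less_imp_le[OF xy]]]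
    by (intro cInf_greatest) (auto intro: order_trans[OF slope_mono1(1)[OF cF x xy] slope_mono1(2)[OF cF x xy]])
qed

lemma rderiv_mono:
  fixes F :: "real \<Rightarrow> real"
  assumes cF: "convex_on {0..} F" and mF: "mono_on {0..} F"
  shows "mono_on {0..} (rderiv F)"
proof (rule mono_onI)
  fix x y :: real assume "x \<in> {0..}" "y \<in> {0..}" "x \<le> y"
  then show "rderiv F x \<le> rderiv F y"
    using rderiv_bounds(1,2)[OF cF mF, of x y] by (cases "x = y") auto
qed

lemma archimedean_zero:
  fixes D C :: real
  assumes "\<And>n::nat. (1::nat) \<le> n \<Longrightarrow> \<bar>D\<bar> \<le> C / real n"
  shows "D = 0"
proof (rule ccontr)
  assume "D \<noteq> 0"
  then have pos: "\<bar>D\<bar> > 0" by auto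
  obtain n :: nat where n: "n > C / \<bar>D\<bar>" using reals_Archimedean2 by blast
  define m where "m = max n 1"
  have "m \<ge> 1" "real m \<ge> real n" by (auto simp: m_def)
  with n have "real m > C / \<bar>D\<bar>" by linarith
  then have "real m * \<bar>D\<bar> > C" using pos by (simp add: field_simps)
  moreover have "\<bar>D\<bar> \<le> C / m" using assms[of m] \<open>m \<ge> 1\<close> by simp
  then have "real m * \<bar>D\<bar> \<le> C" using \<open>m \<ge> 1\<close> by (simp add: field_simps)
  ultimately show False by linarith
qed

lemma convex_FTC:
  fixes F :: "real \<Rightarrow> real"
  assumes cF: "convex_on {0..} F" and mF: "mono_on {0..} F" and l: "0 \<le> l"
  shows "rderiv F integrable_on {0..l}" "F l - F 0 = integral {0..l} (rderiv F)"
proof -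
  let ?f = "rderiv F"
  have mf: "mono_on {0..} ?f" by (rule rderiv_mono[OF cF mF])
  have intg: "?f integrable_on {a..b}" if "0 \<le> a" for a b
    by (rule integrable_on_mono_on) (use mf that in \<open>auto simp: mono_on_def\<close>)
  then show "?f integrable_on {0..l}" by simp
  define D where "D t = F t - F 0 - integral {0..t} ?f" for t
  have step: "\<bar>D b - D a\<bar> \<le> (?f b - ?f a) * (b - a)" if ab: "0 \<le> a" "a \<le> b" for a b
  proof (cases "a = b")
    case True then show ?thesis by simp
  next
    case False
    then have ab': "a < b" using ab by simp
    have comb: "integral {0..a} ?f + integral {a..b} ?f = integral {0..b} ?f"
      using Henstock_Kurzweil_Integration.integral_combine[where a=0 and c=a and b=b and f="rderiv F"] ab intg[of 0 b] by simp
    have i1: "integral {a..b} ?f \<ge> integral {a..b} (\<lambda>x. ?f a)"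
      by (rule integral_le) (use intg ab mf in \<open>auto simp: mono_on_def\<close>)
    have i2: "integral {a..b} ?f \<le> integral {a..b} (\<lambda>x. ?f b)"
      by (rule integral_le) (use intg ab mf in \<open>auto simp: mono_on_def\<close>)
    have c1: "integral {a..b} (\<lambda>x. ?f a) = ?f a * (b - a)" using ab by simp
    have c2: "integral {a..b} (\<lambda>x. ?f b) = ?f b * (b - a)" using ab by simp
    have s1: "?f a \<le> (F b - F a) / (b - a)" "(F b - F a) / (b - a) \<le> ?f b"
      using rderiv_bounds[OF cF mF ab(1) ab'] by auto
    have s1': "?f a * (b - a) \<le> F b - F a" "F b - F a \<le> ?f b * (b - a)"
      using s1 ab' by (auto simp: field_simps)
    have "D b - D a = (F b - F a) - integral {a..b} ?f"
      unfolding D_def using comb by linarith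
    then show ?thesis using i1 i2 c1 c2 s1' by (simp add: abs_le_iff algebra_simps)
  qed
  show "F l - F 0 = integral {0..l} ?f"
  proof (cases "l = 0")
    case True then show ?thesis by simp
  next
    case False
    then have lpos: "l > 0" using l by simp
    have "D l = 0"
    proof (rule archimedean_zero[where C="(?f l - ?f 0) * l"])
      fix n :: nat assume n: "n \<ge> 1"
      define h where "h = l / n"
      have hpos: "h > 0" using lpos n by (simp add: h_def)
      have ind: "\<bar>D (real k * h)\<bar> \<le> (?f (real k * h) - ?f 0) * h" for k :: nat
      proof (induction k)
        case 0 then show ?case by (simp add: D_def)
      next
        case (Suc k)
        have "\<bar>D (real (Suc k) * h) - D (real k * h)\<bar> \<le> (?f (real (Suc k) * h) - ?f (real k * h)) * (real (Suc k) * h - real k * h)"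
          by (rule step) (use hpos in \<open>auto simp: algebra_simps\<close>)
        also have "real (Suc k) * h - real k * h = h" by (simp add: algebra_simps)
        finally show ?case using Suc.IH by (simp add: algebra_simps abs_le_iff)
      qed
      have "real n * h = l" using n by (simp add: h_def)
      with ind[of n] show "\<bar>D l\<bar> \<le> (?f l - ?f 0) * l / real n"
        by (simp add: h_def)
    qed
    then show ?thesis by (simp add: D_def)
  qed
qed



definition Gfun :: "(real \<Rightarrow> real) \<Rightarrow> (real \<Rightarrow> real) \<Rightarrow> real \<Rightarrow> ennreal" where
  "Gfun \<phi>p \<phi>m m = inverse (2 * ennreal (\<phi>p m)) + inverse (2 * ennreal \<bar>\<phi>m m\<bar>)"

definition gfun :: "(real \<Rightarrow> real) \<Rightarrow> (real \<Rightarrow> real) \<Rightarrow> real \<Rightarrow> real" where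
  "gfun \<phi>p \<phi>m m = (if m > 0 then inverse (2 * \<phi>p m) + inverse (2 * \<bar>\<phi>m m\<bar>) else 0)"

definition phis_ok :: "(real \<Rightarrow> real) \<Rightarrow> (real \<Rightarrow> real) \<Rightarrow> bool" where
  "phis_ok \<phi>p \<phi>m \<longleftrightarrow> mono_on {0..} \<phi>p \<and> (\<forall>l\<ge>0. 0 \<le> \<phi>p l) \<and> antimono_on {0..} \<phi>m
     \<and> (\<forall>l\<ge>0. \<phi>m l \<le> 0) \<and> (\<forall>l>0. (\<integral>\<^sup>+ m \<in> {0..l}. Gfun \<phi>p \<phi>m m \<partial>lborel) < \<infinity>)"

lemma phis_pos:
  assumes ok: "phis_ok \<phi>p \<phi>m" and c: "c > 0"
  shows "\<phi>p c > 0" "\<phi>m c < 0"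
proof -
  have mp: "mono_on {0..} \<phi>p" and pp: "\<forall>l\<ge>0. 0 \<le> \<phi>p l" and am: "antimono_on {0..} \<phi>m"
    and nm: "\<forall>l\<ge>0. \<phi>m l \<le> 0" and fin: "(\<integral>\<^sup>+ m \<in> {0..c}. Gfun \<phi>p \<phi>m m \<partial>lborel) < \<infinity>"
    using ok c unfolding phis_ok_def by auto
  have big: "(\<integral>\<^sup>+ m \<in> {0..c}. Gfun \<phi>p \<phi>m m \<partial>lborel) = \<infinity>"
    if "\<And>m. m \<in> {0..c} \<Longrightarrow> Gfun \<phi>p \<phi>m m = \<infinity>"
  proof -
    have "(\<integral>\<^sup>+ m \<in> {0..c}. Gfun \<phi>p \<phi>m m \<partial>lborel) = (\<integral>\<^sup>+ m. \<infinity> * indicator {0..c} m \<partial>lborel)"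
      by (intro nn_integral_cong) (auto simp: that split: split_indicator)
    also have "\<dots> = \<infinity> * emeasure lborel {0..c}"
      by (rule nn_integral_cmult_indicator) auto
    also have "\<dots> = \<infinity>" using c by (simp add: ennreal_top_mult)
    finally show ?thesis .
  qed
  show "\<phi>p c > 0"
  proof (rule ccontr)
    assume "\<not> \<phi>p c > 0"
    moreover have "0 \<le> \<phi>p c" using pp c by simp
    ultimately have z: "\<phi>p c = 0" by linarith
    have "\<phi>p m = 0" if "m \<in> {0..c}" for m
    proof -
      have "\<phi>p m \<le> \<phi>p c" using mp that by (auto simp: mono_on_def)
      moreover have "0 \<le> \<phi>p m" using pp that by auto
      ultimately show ?thesis using z by linarith
    qed
    then have "Gfun \<phi>p \<phi>m m = \<infinity>" if "m \<in> {0..c}" for m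
      using that by (simp add: Gfun_def)
    with big fin show False by simp
  qed
  show "\<phi>m c < 0"
  proof (rule ccontr)
    assume "\<not> \<phi>m c < 0"
    moreover have "\<phi>m c \<le> 0" using nm c by simp
    ultimately have z: "\<phi>m c = 0" by linarith
    have "\<phi>m m = 0" if "m \<in> {0..c}" for m
    proof -
      have "\<phi>m m \<ge> \<phi>m c" using am that by (auto simp: monotone_on_def)
      moreover have "\<phi>m m \<le> 0" using nm that by auto
      ultimately show ?thesis using z by linarith
    qed
    then have "Gfun \<phi>p \<phi>m m = \<infinity>" if "m \<in> {0..c}" for m
      using that by (simp add: Gfun_def)
    with big fin show False by simp
  qed
qed

lemma Gfun_gfun:
  assumes ok: "phis_ok \<phi>p \<phi>m" and m: "m > 0"
  shows "Gfun \<phi>p \<phi>m m = ennreal (gfun \<phi>p \<phi>m m)"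
proof -
  have a: "\<phi>p m > 0" "\<phi>m m < 0" using phis_pos[OF ok m] by auto
  have e1: "ennreal (2 * \<phi>p m) = ennreal 2 * ennreal (\<phi>p m)"
    by (rule ennreal_mult) (use a in auto)
  have e2: "ennreal (2 * \<bar>\<phi>m m\<bar>) = ennreal 2 * ennreal \<bar>\<phi>m m\<bar>"
    by (rule ennreal_mult) auto
  have e: "2 * ennreal (\<phi>p m) = ennreal (2 * \<phi>p m)" "2 * ennreal \<bar>\<phi>m m\<bar> = ennreal (2 * \<bar>\<phi>m m\<bar>)"
    unfolding e1 e2 by simp_all
  have "Gfun \<phi>p \<phi>m m = inverse (ennreal (2 * \<phi>p m)) + inverse (ennreal (2 * \<bar>\<phi>m m\<bar>))"
    unfolding Gfun_def e ..
  also have "\<dots> = ennreal (inverse (2 * \<phi>p m)) + ennreal (inverse (2 * \<bar>\<phi>m m\<bar>))"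
    using a by (subst inverse_ennreal, simp)+ simp
  also have "\<dots> = ennreal (inverse (2 * \<phi>p m) + inverse (2 * \<bar>\<phi>m m\<bar>))"
    using a by (intro ennreal_plus[symmetric]) auto
  finally show ?thesis using m by (simp add: gfun_def)
qed

lemma gfun_nonneg:
  assumes "phis_ok \<phi>p \<phi>m" shows "0 \<le> gfun \<phi>p \<phi>m m"
proof (cases "m > 0")
  case True
  then have "\<phi>p m > 0" "\<phi>m m < 0" using phis_pos[OF assms] by auto
  then have "0 \<le> inverse (2 * \<phi>p m)" "0 \<le> inverse (2 * \<bar>\<phi>m m\<bar>)" by auto
  then show ?thesis using True by (simp add: gfun_def)
qed (simp add: gfun_def)

lemma gfun_measurable[measurable]:
  assumes ok: "phis_ok \<phi>p \<phi>m"
  shows "gfun \<phi>p \<phi>m \<in> borel_measurable borel"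
proof -
  have mp: "mono_on {0..} \<phi>p" and am: "antimono_on {0..} \<phi>m"
    using ok unfolding phis_ok_def by auto
  have m1: "mono (\<lambda>m. \<phi>p (max m 0))"
    using mp by (auto simp: mono_def mono_on_def)
  have m2: "mono (\<lambda>m. - \<phi>m (max m 0))"
    using am by (auto simp: mono_def monotone_on_def)
  have [measurable]: "(\<lambda>m. \<phi>p (max m 0)) \<in> borel_measurable borel"
    by (rule borel_measurable_mono[OF m1])
  have mm: "(\<lambda>m. - \<phi>m (max m 0)) \<in> borel_measurable borel"
    by (rule borel_measurable_mono[OF m2])
  have [measurable]: "(\<lambda>m. \<phi>m (max m 0)) \<in> borel_measurable borel"
    using borel_measurable_uminus[OF mm] by simp
  have "gfun \<phi>p \<phi>m = (\<lambda>m. if m > 0 then inverse (2 * \<phi>p (max m 0)) + inverse (2 * \<bar>\<phi>m (max m 0)\<bar>) else 0)"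
    by (auto simp: gfun_def fun_eq_iff max_def)
  also have "\<dots> \<in> borel_measurable borel" by measurable
  finally show ?thesis .
qed



lemma gfun_nonpos: "m \<le> 0 \<Longrightarrow> gfun \<phi>p \<phi>m m = 0"
  by (simp add: gfun_def)

definition Dl :: "(real \<Rightarrow> real) \<Rightarrow> (real \<Rightarrow> real) \<Rightarrow> real \<Rightarrow> real" where
  "Dl \<phi>p \<phi>m l = enn2real (\<integral>\<^sup>+ m \<in> {0..l}. Gfun \<phi>p \<phi>m m \<partial>lborel)"

lemma G_eq_g:
  assumes ok: "phis_ok \<phi>p \<phi>m"
  shows "(\<integral>\<^sup>+ m \<in> {0..l}. Gfun \<phi>p \<phi>m m \<partial>lborel) = (\<integral>\<^sup>+ m. ennreal (gfun \<phi>p \<phi>m m * indicator {0..l} m) \<partial>lborel)"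
proof (rule nn_integral_cong_AE)
  show "AE m in lborel. Gfun \<phi>p \<phi>m m * indicator {0..l} m = ennreal (gfun \<phi>p \<phi>m m * indicator {0..l} m)"
    using AE_lborel_singleton[of 0]
  proof eventually_elim
    case (elim m)
    show ?case
    proof (cases "m \<in> {0..l}")
      case True
      then have "m > 0" using elim by auto
      then show ?thesis using True Gfun_gfun[OF ok] by simp
    qed simp
  qed
qed

lemma g_nn_finite:
  assumes ok: "phis_ok \<phi>p \<phi>m"
  shows "(\<integral>\<^sup>+ m. ennreal (gfun \<phi>p \<phi>m m * indicator {0..l} m) \<partial>lborel) < \<infinity>"
proof (cases "l > 0")
  case True
  then show ?thesis using ok G_eq_g[OF ok, of l] unfolding phis_ok_def by auto
next
  case False
  have "gfun \<phi>p \<phi>m m * indicator {0..l} m = 0" for m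
    using False gfun_nonpos[of m \<phi>p \<phi>m] by (auto simp: indicator_def)
  then have "ennreal (gfun \<phi>p \<phi>m m * indicator {0..l} m) = 0" for m
    by (simp only: ennreal_0)
  then have "(\<lambda>m. ennreal (gfun \<phi>p \<phi>m m * indicator {0..l} m)) = (\<lambda>m. 0)" by (simp add: fun_eq_iff del: ennreal_eq_0_iff)
  then show ?thesis by simp
qed

lemma g_set_integrable:
  assumes ok: "phis_ok \<phi>p \<phi>m"
  shows "set_integrable lborel {a..b} (gfun \<phi>p \<phi>m)"
proof -
  have "(\<integral>\<^sup>+ m. ennreal (norm (indicator {a..b} m *\<^sub>R gfun \<phi>p \<phi>m m)) \<partial>lborel)
        \<le> (\<integral>\<^sup>+ m. ennreal (gfun \<phi>p \<phi>m m * indicator {0..b} m) \<partial>lborel)"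
    using gfun_nonneg[OF ok] gfun_nonpos
    by (intro nn_integral_mono) (auto simp: indicator_def not_le)
  also have "\<dots> < \<infinity>" by (rule g_nn_finite[OF ok])
  finally show ?thesis
    unfolding set_integrable_def using gfun_measurable[OF ok]
    by (intro integrableI_bounded) auto
qed

lemma Dl_integral:
  assumes ok: "phis_ok \<phi>p \<phi>m"
  shows "Dl \<phi>p \<phi>m l = (LINT m:{0..l}|lborel. gfun \<phi>p \<phi>m m)"
    and "ennreal (Dl \<phi>p \<phi>m l) = (\<integral>\<^sup>+ m. ennreal (gfun \<phi>p \<phi>m m * indicator {0..l} m) \<partial>lborel)"
proof -
  have "(LINT m:{0..l}|lborel. gfun \<phi>p \<phi>m m) = integral\<^sup>L lborel (\<lambda>m. gfun \<phi>p \<phi>m m * indicator {0..l} m)"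
    unfolding set_lebesgue_integral_def by (simp add: mult.commute)
  also have "\<dots> = enn2real (\<integral>\<^sup>+ m. ennreal (gfun \<phi>p \<phi>m m * indicator {0..l} m) \<partial>lborel)"
    using gfun_nonneg[OF ok] gfun_measurable[OF ok] by (intro integral_eq_nn_integral) auto
  also have "\<dots> = Dl \<phi>p \<phi>m l" unfolding Dl_def G_eq_g[OF ok] ..
  finally show "Dl \<phi>p \<phi>m l = (LINT m:{0..l}|lborel. gfun \<phi>p \<phi>m m)" by simp
  show "ennreal (Dl \<phi>p \<phi>m l) = (\<integral>\<^sup>+ m. ennreal (gfun \<phi>p \<phi>m m * indicator {0..l} m) \<partial>lborel)"
    unfolding Dl_def G_eq_g[OF ok] using g_nn_finite[OF ok, of l]
    by (simp add: less_top[symmetric])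
qed

lemma Dl_shift:
  assumes ok: "phis_ok \<phi>p \<phi>m" and a: "a \<le> 0"
  shows "Dl \<phi>p \<phi>m l = integral {a..l} (gfun \<phi>p \<phi>m)"
proof -
  have "Dl \<phi>p \<phi>m l = (LINT m:{a..l}|lborel. gfun \<phi>p \<phi>m m)"
    unfolding Dl_integral(1)[OF ok] set_lebesgue_integral_def
    using a by (intro Bochner_Integration.integral_cong) (auto simp: gfun_def split: split_indicator)
  also have "\<dots> = integral {a..l} (gfun \<phi>p \<phi>m)"
    by (rule set_borel_integral_eq_integral(2)[OF g_set_integrable[OF ok]])
  finally show ?thesis .
qed

lemma Dl_cont:
  assumes ok: "phis_ok \<phi>p \<phi>m"
  shows "isCont (Dl \<phi>p \<phi>m) x"
proof -
  define a where "a = - \<bar>x\<bar> - 1"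
  define b where "b = \<bar>x\<bar> + 1"
  have a0: "a \<le> 0" by (simp add: a_def)
  have "gfun \<phi>p \<phi>m integrable_on {a..b}"
    by (rule set_borel_integral_eq_integral(1)[OF g_set_integrable[OF ok]])
  then have "continuous_on {a..b} (\<lambda>l. integral {a..l} (gfun \<phi>p \<phi>m))"
    by (rule indefinite_integral_continuous_1)
  then have "continuous_on {a..b} (Dl \<phi>p \<phi>m)"
    using Dl_shift[OF ok a0] by simp
  moreover have "x \<in> interior {a..b}" by (auto simp: a_def b_def)
  ultimately show ?thesis by (rule continuous_on_interior)
qed

lemma Dl_nonpos:
  assumes ok: "phis_ok \<phi>p \<phi>m" and "l \<le> 0"
  shows "Dl \<phi>p \<phi>m l = 0"
proof -
  have "Dl \<phi>p \<phi>m l = (LINT m:{0..l}|lborel. 0)"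
    unfolding Dl_integral(1)[OF ok] set_lebesgue_integral_def
    using assms(2) by (intro Bochner_Integration.integral_cong) (auto simp: gfun_def split: split_indicator)
  then show ?thesis by simp
qed

lemma Dl_diff:
  assumes ok: "phis_ok \<phi>p \<phi>m" and ab: "0 \<le> a" "a \<le> b"
  shows "Dl \<phi>p \<phi>m b - Dl \<phi>p \<phi>m a = integral {a..b} (gfun \<phi>p \<phi>m)"
proof -
  have i: "gfun \<phi>p \<phi>m integrable_on {0..b}"
    by (rule set_borel_integral_eq_integral(1)[OF g_set_integrable[OF ok]])
  have "integral {0..a} (gfun \<phi>p \<phi>m) + integral {a..b} (gfun \<phi>p \<phi>m) = integral {0..b} (gfun \<phi>p \<phi>m)"
    using Henstock_Kurzweil_Integration.integral_combine[where a=0 and c=a and b=b and f="gfun \<phi>p \<phi>m"] ab i by simp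
  then show ?thesis using Dl_shift[OF ok, of 0] by simp
qed

lemma Dl_strict:
  assumes ok: "phis_ok \<phi>p \<phi>m" and ab: "0 \<le> a" "a < b"
  shows "Dl \<phi>p \<phi>m a < Dl \<phi>p \<phi>m b"
proof -
  have mp: "mono_on {0..} \<phi>p" using ok unfolding phis_ok_def by auto
  have pb: "\<phi>p b > 0" using phis_pos[OF ok] ab by auto
  have i: "gfun \<phi>p \<phi>m integrable_on {a..b}"
    by (rule set_borel_integral_eq_integral(1)[OF g_set_integrable[OF ok]])
  have "integral {a<..<b} (\<lambda>_. inverse (2 * \<phi>p b)) \<le> integral {a<..<b} (gfun \<phi>p \<phi>m)"
  proof (rule integral_le)
    show "(\<lambda>_. inverse (2 * \<phi>p b)) integrable_on {a<..<b}"
      by (simp add: integrable_on_open_interval_real integrable_const_ivl)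
    show "gfun \<phi>p \<phi>m integrable_on {a<..<b}"
      using i by (simp add: integrable_on_open_interval_real)
    fix m assume m: "m \<in> {a<..<b}"
    then have m0: "m > 0" using ab by auto
    have pm: "\<phi>p m > 0" "\<phi>m m < 0" using phis_pos[OF ok m0] by auto
    have "\<phi>p m \<le> \<phi>p b" using mp m ab by (auto simp: mono_on_def)
    then have "inverse (2 * \<phi>p b) \<le> inverse (2 * \<phi>p m)"
      using pm by (intro le_imp_inverse_le) auto
    moreover have "0 \<le> inverse (2 * \<bar>\<phi>m m\<bar>)" by simp
    ultimately have "inverse (2 * \<phi>p b) \<le> inverse (2 * \<phi>p m) + inverse (2 * \<bar>\<phi>m m\<bar>)"
      by linarith
    then show "inverse (2 * \<phi>p b) \<le> gfun \<phi>p \<phi>m m"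
      using m0 unfolding gfun_def by simp
  qed
  moreover have "integral {a<..<b} (\<lambda>_. inverse (2 * \<phi>p b)) = (b - a) * inverse (2 * \<phi>p b)"
    using ab by (simp flip: integral_open_interval_real)
  moreover have "(b - a) * inverse (2 * \<phi>p b) > 0" using ab pb by simp
  moreover have "integral {a..b} (gfun \<phi>p \<phi>m) = integral {a<..<b} (gfun \<phi>p \<phi>m)"
    by (rule integral_open_interval_real)
  ultimately have "integral {a..b} (gfun \<phi>p \<phi>m) > 0"
    by linarith
  moreover have "Dl \<phi>p \<phi>m b - Dl \<phi>p \<phi>m a = integral {a..b} (gfun \<phi>p \<phi>m)"
    using Dl_diff[OF ok ab(1), of b] ab by simp
  ultimately show ?thesis by linarith
qed

lemma Dl_mono:
  assumes ok: "phis_ok \<phi>p \<phi>m" and ab: "a \<le> b"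
  shows "Dl \<phi>p \<phi>m a \<le> Dl \<phi>p \<phi>m b"
proof (cases "a \<le> 0")
  case True
  have "Dl \<phi>p \<phi>m b \<ge> 0" unfolding Dl_def by simp
  then show ?thesis using Dl_nonpos[OF ok True] by simp
next
  case False
  then show ?thesis using Dl_strict[OF ok, of a b] ab by (cases "a = b") auto
qed

lemma Dl_pos:
  assumes ok: "phis_ok \<phi>p \<phi>m" and "m > 0"
  shows "Dl \<phi>p \<phi>m m > 0"
  using Dl_strict[OF ok, of 0 m] Dl_nonpos[OF ok, of 0] assms by simp

lemma Dl_surj:
  assumes ok: "phis_ok \<phi>p \<phi>m" and lim: "filterlim (Dl \<phi>p \<phi>m) at_top at_top" and t: "0 \<le> t"
  shows "\<exists>m\<ge>0. Dl \<phi>p \<phi>m m = t"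
proof -
  have "eventually (\<lambda>m. Dl \<phi>p \<phi>m m \<ge> t) at_top"
    using lim by (simp add: filterlim_at_top)
  then obtain M where M: "\<And>m. m \<ge> M \<Longrightarrow> Dl \<phi>p \<phi>m m \<ge> t" by (auto simp: eventually_at_top_linorder)
  define M' where "M' = max M 0"
  have "Dl \<phi>p \<phi>m 0 \<le> t" "t \<le> Dl \<phi>p \<phi>m M'" "0 \<le> M'"
    using Dl_nonpos[OF ok, of 0] t M[of M'] by (auto simp: M'_def)
  then obtain m where "0 \<le> m" "m \<le> M'" "Dl \<phi>p \<phi>m m = t"
    using IVT[of "Dl \<phi>p \<phi>m" 0 t M'] Dl_cont[OF ok] by blast
  then show ?thesis by blast
qed



lemma Dl_measurable[measurable]:
  assumes ok: "phis_ok \<phi>p \<phi>m"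
  shows "Dl \<phi>p \<phi>m \<in> borel_measurable borel"
  by (rule borel_measurable_continuous_onI, rule continuous_at_imp_continuous_on) (use Dl_cont[OF ok] in auto)

lemma g_Icc_nn:
  assumes ok: "phis_ok \<phi>p \<phi>m" and ab: "0 \<le> a" "a \<le> b"
  shows "(\<integral>\<^sup>+ m. ennreal (gfun \<phi>p \<phi>m m) * indicator {a..b} m \<partial>lborel) = ennreal (Dl \<phi>p \<phi>m b - Dl \<phi>p \<phi>m a)"
proof -
  have "(\<integral>\<^sup>+ m. ennreal (gfun \<phi>p \<phi>m m) * indicator {a..b} m \<partial>lborel)
      = (\<integral>\<^sup>+ m. ennreal (indicator {a..b} m *\<^sub>R gfun \<phi>p \<phi>m m) \<partial>lborel)"
    by (intro nn_integral_cong) (auto simp: indicator_def)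
  also have "\<dots> = (LINT m:{a..b}|lborel. gfun \<phi>p \<phi>m m)"
    unfolding set_lebesgue_integral_def
    using g_set_integrable[OF ok, of a b] gfun_nonneg[OF ok]
    by (intro nn_integral_eq_integral) (auto simp: set_integrable_def)
  also have "\<dots> = integral {a..b} (gfun \<phi>p \<phi>m)"
    by (simp add: set_borel_integral_eq_integral(2)[OF g_set_integrable[OF ok]])
  also have "\<dots> = Dl \<phi>p \<phi>m b - Dl \<phi>p \<phi>m a" using Dl_diff[OF ok ab] by simp
  finally show ?thesis .
qed

lemma emeasure_half_line_Icc:
  "emeasure (density lborel (indicator {0..} :: real \<Rightarrow> ennreal)) {a..b} = ennreal (b - max a 0)"
proof -
  have "emeasure (density lborel (indicator {0..} :: real \<Rightarrow> ennreal)) {a..b}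
      = (\<integral>\<^sup>+ x. indicator {0..} x * indicator {a..b} x \<partial>lborel)"
    by (rule emeasure_density) auto
  also have "\<dots> = (\<integral>\<^sup>+ x. indicator {max a 0..b} x \<partial>lborel)"
    by (intro nn_integral_cong) (auto simp: indicator_def)
  also have "\<dots> = emeasure lborel {max a 0..b}" by simp
  also have "\<dots> = ennreal (b - max a 0)"
    unfolding emeasure_lborel_Icc_eq by (auto simp: ennreal_neg)
  finally show ?thesis .
qed

lemma pushforward_eq:
  assumes ok: "phis_ok \<phi>p \<phi>m" and lim: "filterlim (Dl \<phi>p \<phi>m) at_top at_top"
  shows "density lborel (indicator {0..} :: real \<Rightarrow> ennreal)
       = distr (density lborel (\<lambda>m. ennreal (gfun \<phi>p \<phi>m m))) borel (Dl \<phi>p \<phi>m)"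
proof (rule measure_eqI_generator_eq[where \<Omega>=UNIV and E="range (\<lambda>(a,b). {a..b})" and A="\<lambda>i. {- real i..real i}"])
  show "Int_stable (range (\<lambda>(a, b). {a..b::real}))"
    unfolding Int_stable_def
  proof (intro ballI)
    fix X Y assume "X \<in> range (\<lambda>(a, b). {a..b::real})" "Y \<in> range (\<lambda>(a, b). {a..b::real})"
    then obtain a b c d where "X = {a..b}" "Y = {c..d}" by auto
    then have "X \<inter> Y = (\<lambda>(a, b). {a..b}) (max a c, min b d)" by auto
    then show "X \<inter> Y \<in> range (\<lambda>(a, b). {a..b::real})" by blast
  qed
  show "range (\<lambda>(a, b). {a..b::real}) \<subseteq> Pow UNIV" by auto
  have sb: "sets (borel :: real measure) = sigma_sets UNIV (range (\<lambda>(a, b). {a..b}))"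
    by (subst borel_eq_atLeastAtMost) (simp add: sets_measure_of)
  show "sets (density lborel (indicator {0..} :: real \<Rightarrow> ennreal)) = sigma_sets UNIV (range (\<lambda>(a, b). {a..b}))"
    using sb by simp
  show "sets (distr (density lborel (\<lambda>m. ennreal (gfun \<phi>p \<phi>m m))) borel (Dl \<phi>p \<phi>m)) = sigma_sets UNIV (range (\<lambda>(a, b). {a..b}))"
    using sb by simp
  show "range (\<lambda>i. {- real i..real i}) \<subseteq> range (\<lambda>(a, b). {a..b})"
  proof
    fix X assume "X \<in> range (\<lambda>i::nat. {- real i..real i})"
    then obtain i :: nat where "X = (\<lambda>(a, b). {a..b}) (- real i, real i)" by auto
    then show "X \<in> range (\<lambda>(a, b). {a..b::real})" by blast
  qed
  show "(\<Union>i. {- real i..real i}) = (UNIV :: real set)"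
  proof (intro set_eqI iffI)
    fix x :: real
    obtain n :: nat where "\<bar>x\<bar> \<le> real n" using real_arch_simple by blast
    then have "x \<in> {- real n..real n}" by auto
    then show "x \<in> (\<Union>i. {- real i..real i})" by blast
  qed auto
  show "emeasure (density lborel (indicator {0..} :: real \<Rightarrow> ennreal)) {- real i..real i} \<noteq> \<infinity>" for i
    unfolding emeasure_half_line_Icc by simp
  fix X assume "X \<in> range (\<lambda>(a, b). {a..b::real})"
  then obtain a b where X: "X = {a..b}" by auto
  have mg[measurable]: "(\<lambda>m. ennreal (gfun \<phi>p \<phi>m m)) \<in> borel_measurable lborel"
    using gfun_measurable[OF ok] by simp
  have mD[measurable]: "Dl \<phi>p \<phi>m \<in> borel_measurable borel" by (rule Dl_measurable[OF ok])
  have "emeasure (distr (density lborel (\<lambda>m. ennreal (gfun \<phi>p \<phi>m m))) borel (Dl \<phi>p \<phi>m)) {a..b}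
      = emeasure (density lborel (\<lambda>m. ennreal (gfun \<phi>p \<phi>m m))) (Dl \<phi>p \<phi>m -` {a..b})"
    by (subst emeasure_distr) auto
  also have "\<dots> = (\<integral>\<^sup>+ m. ennreal (gfun \<phi>p \<phi>m m) * indicator (Dl \<phi>p \<phi>m -` {a..b}) m \<partial>lborel)"
    by (rule emeasure_density) (use measurable_sets[OF mD, of "{a..b}"] in auto)
  also have "\<dots> = ennreal (b - max a 0)"
  proof (cases "max a 0 \<le> b")
    case False
    have z: "ennreal (gfun \<phi>p \<phi>m m) * indicator (Dl \<phi>p \<phi>m -` {a..b}) m = 0" for m
    proof (cases "m > 0")
      case True
      then have "Dl \<phi>p \<phi>m m > 0" by (rule Dl_pos[OF ok])
      then have "Dl \<phi>p \<phi>m m \<notin> {a..b}" using False by auto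
      then show ?thesis by simp
    next
      case False
      then show ?thesis by (simp add: gfun_nonpos)
    qed
    have "(\<integral>\<^sup>+ m. ennreal (gfun \<phi>p \<phi>m m) * indicator (Dl \<phi>p \<phi>m -` {a..b}) m \<partial>lborel) = (\<integral>\<^sup>+ m. 0 \<partial>(lborel::real measure))"
      by (simp only: z)
    moreover have "b - max a 0 \<le> 0" using False by linarith
    ultimately show ?thesis by (simp add: ennreal_eq_0_iff)
  next
    case True
    obtain \<alpha> where \<alpha>: "\<alpha> \<ge> 0" "Dl \<phi>p \<phi>m \<alpha> = max a 0"
      using Dl_surj[OF ok lim, of "max a 0"] by auto
    obtain \<beta> where \<beta>: "\<beta> \<ge> 0" "Dl \<phi>p \<phi>m \<beta> = b"
      using Dl_surj[OF ok lim, of b] True by auto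
    have le_iff: "Dl \<phi>p \<phi>m x \<le> Dl \<phi>p \<phi>m y \<longleftrightarrow> x \<le> y" if "0 \<le> x" "0 \<le> y" for x y
      using Dl_strict[OF ok, of x y] Dl_strict[OF ok, of y x] that
      by (metis linorder_not_le order_less_imp_le order.strict_implies_not_eq order_antisym_conv le_less)
    have ab: "\<alpha> \<le> \<beta>" using le_iff[OF \<alpha>(1) \<beta>(1)] \<alpha> \<beta> True by simp
    have "ennreal (gfun \<phi>p \<phi>m m) * indicator (Dl \<phi>p \<phi>m -` {a..b}) m
        = ennreal (gfun \<phi>p \<phi>m m) * indicator {\<alpha>..\<beta>} m" for m
    proof (cases "m > 0")
      case True
      have "Dl \<phi>p \<phi>m m \<ge> 0" using Dl_pos[OF ok True] by simp
      then have "(Dl \<phi>p \<phi>m m \<in> {a..b}) \<longleftrightarrow> (max a 0 \<le> Dl \<phi>p \<phi>m m \<and> Dl \<phi>p \<phi>m m \<le> b)" by auto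
      also have "\<dots> \<longleftrightarrow> (\<alpha> \<le> m \<and> m \<le> \<beta>)"
        using le_iff[OF \<alpha>(1), of m] le_iff[OF _ \<beta>(1), of m] True \<alpha> \<beta> by auto
      finally show ?thesis by (simp add: indicator_def)
    next
      case False
      then show ?thesis by (simp add: gfun_nonpos)
    qed
    then have "(\<integral>\<^sup>+ m. ennreal (gfun \<phi>p \<phi>m m) * indicator (Dl \<phi>p \<phi>m -` {a..b}) m \<partial>lborel)
        = (\<integral>\<^sup>+ m. ennreal (gfun \<phi>p \<phi>m m) * indicator {\<alpha>..\<beta>} m \<partial>lborel)" by simp
    also have "\<dots> = ennreal (Dl \<phi>p \<phi>m \<beta> - Dl \<phi>p \<phi>m \<alpha>)" by (rule g_Icc_nn[OF ok \<alpha>(1) ab])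
    finally show ?thesis using \<alpha> \<beta> by simp
  qed
  finally show "emeasure (density lborel (indicator {0..} :: real \<Rightarrow> ennreal)) X =
         emeasure (distr (density lborel (\<lambda>m. ennreal (gfun \<phi>p \<phi>m m))) borel (Dl \<phi>p \<phi>m)) X"
    unfolding X emeasure_half_line_Icc ..
qed

lemma pushforward_nn:
  assumes ok: "phis_ok \<phi>p \<phi>m" and lim: "filterlim (Dl \<phi>p \<phi>m) at_top at_top"
    and h[measurable]: "h \<in> borel_measurable borel"
  shows "(\<integral>\<^sup>+ m. h (Dl \<phi>p \<phi>m m) * ennreal (gfun \<phi>p \<phi>m m) \<partial>lborel)
       = (\<integral>\<^sup>+ t. h t * indicator {0..} t \<partial>lborel)"
proof -
  have mg[measurable]: "(\<lambda>m. ennreal (gfun \<phi>p \<phi>m m)) \<in> borel_measurable borel"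
    using gfun_measurable[OF ok] by simp
  have mD[measurable]: "Dl \<phi>p \<phi>m \<in> borel_measurable borel" by (rule Dl_measurable[OF ok])
  have "(\<integral>\<^sup>+ t. h t * indicator {0..} t \<partial>lborel) = (\<integral>\<^sup>+ t. h t \<partial>density lborel (indicator {0..}))"
    by (subst nn_integral_density) (auto simp: mult.commute)
  also have "\<dots> = (\<integral>\<^sup>+ t. h t \<partial>distr (density lborel (\<lambda>m. ennreal (gfun \<phi>p \<phi>m m))) borel (Dl \<phi>p \<phi>m))"
    by (simp only: pushforward_eq[OF ok lim])
  also have "\<dots> = (\<integral>\<^sup>+ m. h (Dl \<phi>p \<phi>m m) \<partial>density lborel (\<lambda>m. ennreal (gfun \<phi>p \<phi>m m)))"
    by (rule nn_integral_distr) auto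
  also have "\<dots> = (\<integral>\<^sup>+ m. ennreal (gfun \<phi>p \<phi>m m) * h (Dl \<phi>p \<phi>m m) \<partial>lborel)"
    by (rule nn_integral_density) auto
  finally show ?thesis by (simp add: mult.commute)
qed



lemma measure_eqI_atLeast:
  fixes M N :: "real measure"
  assumes sets: "sets M = sets borel" "sets N = sets borel"
  assumes fin: "\<And>x. emeasure M {x ..} < \<infinity>"
  assumes "\<And>x. emeasure M {x ..} = emeasure N {x ..}"
  shows "M = N"
proof (rule measure_eqI_generator_eq_countable)
  let ?LT = "\<lambda>a::real. {a ..}" let ?E = "range ?LT"
  show "Int_stable ?E"
    unfolding Int_stable_def
  proof (intro ballI)
    fix X Y assume "X \<in> ?E" "Y \<in> ?E"
    then obtain a b where "X = {a..}" "Y = {b..}" by auto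
    then have "X \<inter> Y = ?LT (max a b)" by auto
    then show "X \<inter> Y \<in> ?E" by blast
  qed
  show "?E \<subseteq> Pow UNIV" "sets M = sigma_sets UNIV ?E" "sets N = sigma_sets UNIV ?E"
    unfolding sets borel_Ici by auto
  show "?LT`Rats \<subseteq> ?E" by auto
  show "(\<Union>(?LT`Rats)) = UNIV"
  proof (intro set_eqI iffI)
    fix x :: real
    obtain q where "q \<in> \<rat>" "q < x" using Rats_no_bot_less by blast
    then have "x \<in> ?LT q" by auto
    then show "x \<in> \<Union>(?LT`Rats)" using \<open>q \<in> \<rat>\<close> by blast
  qed auto
  show "\<And>a. a \<in> ?LT`Rats \<Longrightarrow> emeasure M a \<noteq> \<infinity>"
    using fin by (auto simp: less_top)
qed (auto intro: assms countable_rat)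

lemma exp_Icc_nn:
  assumes "0 \<le> C"
  shows "(\<integral>\<^sup>+ t. ennreal (exp t) * indicator {0..C} t \<partial>lborel) = ennreal (exp C - 1)"
proof -
  have "(exp has_integral (exp C - exp 0)) {0..C}"
    by (rule fundamental_theorem_of_calculus)
       (use assms in \<open>auto intro!: has_vector_derivative_at_within simp: has_real_derivative_iff_has_vector_derivative[symmetric] intro: DERIV_exp has_field_derivative_at_within\<close>)
  then have "(\<integral>\<^sup>+ t. ennreal (indicator {0..C} t * exp t) \<partial>lborel) = ennreal (exp C - 1)"
    by (subst nn_integral_has_integral_lebesgue[where I="exp C - 1"]) auto
  moreover have "(\<integral>\<^sup>+ t. ennreal (exp t) * indicator {0..C} t \<partial>lborel) = (\<integral>\<^sup>+ t. ennreal (indicator {0..C} t * exp t) \<partial>lborel)"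
    by (intro nn_integral_cong) (simp add: indicator_def)
  ultimately show ?thesis by simp
qed

lemma expneg_Ici_nn:
  shows "(\<integral>\<^sup>+ t. ennreal (exp (- t)) * indicator {C..} t \<partial>lborel) = ennreal (exp (- C))"
proof -
  have "(\<integral>\<^sup>+ t. ennreal (exp (- t)) * indicator {C..} t \<partial>lborel) = 0 - (- exp (- C))"
  proof (rule nn_integral_FTC_atLeast)
    show "(\<lambda>t::real. exp (- t)) \<in> borel_measurable borel"
      by (intro borel_measurable_continuous_onI continuous_on_exp continuous_on_minus continuous_on_id)
    show "((\<lambda>t. - exp (- t)) has_real_derivative exp (- x)) (at x)" for x
      by (auto intro!: derivative_eq_intros)
    have "((\<lambda>t::real. exp (- t)) \<longlongrightarrow> 0) at_top"
      using filterlim_compose[OF exp_at_bot filterlim_uminus_at_bot_at_top] by simp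
    then show "((\<lambda>t::real. - exp (- t)) \<longlongrightarrow> 0) at_top"
      using tendsto_minus[of "\<lambda>t::real. exp (- t)" 0 at_top] by simp
  qed auto
  then show ?thesis by simp
qed

lemma Dl_le_iff:
  assumes ok: "phis_ok \<phi>p \<phi>m" and "0 \<le> x" "0 \<le> y"
  shows "Dl \<phi>p \<phi>m x \<le> Dl \<phi>p \<phi>m y \<longleftrightarrow> x \<le> y"
  using Dl_strict[OF ok, of x y] Dl_strict[OF ok, of y x] assms(2,3)
  by (metis linorder_not_le order_less_imp_le order.strict_implies_not_eq order_antisym_conv le_less)

lemma Dl_nonneg: "phis_ok \<phi>p \<phi>m \<Longrightarrow> 0 \<le> Dl \<phi>p \<phi>m x"
  unfolding Dl_def by simp

lemma I1:
  assumes ok: "phis_ok \<phi>p \<phi>m" and lim: "filterlim (Dl \<phi>p \<phi>m) at_top at_top" and c: "0 \<le> c"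
  shows "(\<integral>\<^sup>+ m. ennreal (exp (Dl \<phi>p \<phi>m m)) * ennreal (gfun \<phi>p \<phi>m m) * indicator {..c} m \<partial>lborel)
       = ennreal (exp (Dl \<phi>p \<phi>m c) - 1)"
proof -
  let ?h = "\<lambda>t. ennreal (exp t) * indicator {..Dl \<phi>p \<phi>m c} t"
  have "ennreal (exp (Dl \<phi>p \<phi>m m)) * ennreal (gfun \<phi>p \<phi>m m) * indicator {..c} m
      = ?h (Dl \<phi>p \<phi>m m) * ennreal (gfun \<phi>p \<phi>m m)" for m
  proof (cases "m > 0")
    case True
    then have "(m \<le> c) = (Dl \<phi>p \<phi>m m \<le> Dl \<phi>p \<phi>m c)" using Dl_le_iff[OF ok, of m c] c by simp
    then show ?thesis by (simp add: indicator_def mult_ac)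
  next
    case False
    then show ?thesis by (simp add: gfun_nonpos)
  qed
  then have "(\<integral>\<^sup>+ m. ennreal (exp (Dl \<phi>p \<phi>m m)) * ennreal (gfun \<phi>p \<phi>m m) * indicator {..c} m \<partial>lborel)
      = (\<integral>\<^sup>+ m. ?h (Dl \<phi>p \<phi>m m) * ennreal (gfun \<phi>p \<phi>m m) \<partial>lborel)" by simp
  also have "\<dots> = (\<integral>\<^sup>+ t. ?h t * indicator {0..} t \<partial>lborel)"
    by (rule pushforward_nn[OF ok lim]) measurable
  also have "\<dots> = (\<integral>\<^sup>+ t. ennreal (exp t) * indicator {0..Dl \<phi>p \<phi>m c} t \<partial>lborel)"
    by (intro nn_integral_cong) (auto simp: indicator_def)
  also have "\<dots> = ennreal (exp (Dl \<phi>p \<phi>m c) - 1)"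
    by (rule exp_Icc_nn[OF Dl_nonneg[OF ok]])
  finally show ?thesis .
qed

lemma I2:
  assumes ok: "phis_ok \<phi>p \<phi>m" and lim: "filterlim (Dl \<phi>p \<phi>m) at_top at_top" and c: "0 \<le> c"
  shows "(\<integral>\<^sup>+ m. ennreal (exp (- Dl \<phi>p \<phi>m m)) * ennreal (gfun \<phi>p \<phi>m m) * indicator {c..} m \<partial>lborel)
       = ennreal (exp (- Dl \<phi>p \<phi>m c))"
proof -
  let ?h = "\<lambda>t. ennreal (exp (- t)) * indicator {Dl \<phi>p \<phi>m c..} t"
  have "ennreal (exp (- Dl \<phi>p \<phi>m m)) * ennreal (gfun \<phi>p \<phi>m m) * indicator {c..} m
      = ?h (Dl \<phi>p \<phi>m m) * ennreal (gfun \<phi>p \<phi>m m)" for m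
  proof (cases "m > 0")
    case True
    then have "(c \<le> m) = (Dl \<phi>p \<phi>m c \<le> Dl \<phi>p \<phi>m m)" using Dl_le_iff[OF ok, of c m] c by simp
    then show ?thesis by (simp add: indicator_def mult_ac)
  next
    case False
    then show ?thesis by (simp add: gfun_nonpos)
  qed
  then have "(\<integral>\<^sup>+ m. ennreal (exp (- Dl \<phi>p \<phi>m m)) * ennreal (gfun \<phi>p \<phi>m m) * indicator {c..} m \<partial>lborel)
      = (\<integral>\<^sup>+ m. ?h (Dl \<phi>p \<phi>m m) * ennreal (gfun \<phi>p \<phi>m m) \<partial>lborel)" by simp
  also have "\<dots> = (\<integral>\<^sup>+ t. ?h t * indicator {0..} t \<partial>lborel)"
    by (rule pushforward_nn[OF ok lim]) measurable
  also have "\<dots> = (\<integral>\<^sup>+ t. ennreal (exp (- t)) * indicator {Dl \<phi>p \<phi>m c..} t \<partial>lborel)"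
    using Dl_nonneg[OF ok, of c] by (intro nn_integral_cong) (auto simp: indicator_def)
  also have "\<dots> = ennreal (exp (- Dl \<phi>p \<phi>m c))"
    by (rule expneg_Ici_nn)
  finally show ?thesis .
qed

lemma nu_density:
  assumes ok: "phis_ok \<phi>p \<phi>m" and lim: "filterlim (Dl \<phi>p \<phi>m) at_top at_top"
    and P: "prob_space \<nu>" and S: "sets \<nu> = sets borel"
    and tail: "\<forall>l\<ge>0. measure \<nu> {l..} = exp (- Dl \<phi>p \<phi>m l)"
  shows "\<nu> = density lborel (\<lambda>m. ennreal (exp (- Dl \<phi>p \<phi>m m) * gfun \<phi>p \<phi>m m))"
proof (rule measure_eqI_atLeast)
  interpret prob_space \<nu> by (rule P)
  show "sets \<nu> = sets borel" by (rule S)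
  show "sets (density lborel (\<lambda>m. ennreal (exp (- Dl \<phi>p \<phi>m m) * gfun \<phi>p \<phi>m m))) = sets borel" by simp
  show "emeasure \<nu> {x..} < \<infinity>" for x by (simp add: less_top[symmetric])
  have mD[measurable]: "Dl \<phi>p \<phi>m \<in> borel_measurable borel" by (rule Dl_measurable[OF ok])
  have mg[measurable]: "gfun \<phi>p \<phi>m \<in> borel_measurable borel" by (rule gfun_measurable[OF ok])
  fix x :: real
  have "emeasure (density lborel (\<lambda>m. ennreal (exp (- Dl \<phi>p \<phi>m m) * gfun \<phi>p \<phi>m m))) {x..}
      = (\<integral>\<^sup>+ m. ennreal (exp (- Dl \<phi>p \<phi>m m) * gfun \<phi>p \<phi>m m) * indicator {x..} m \<partial>lborel)"
    by (rule emeasure_density) auto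
  also have "\<dots> = (\<integral>\<^sup>+ m. ennreal (exp (- Dl \<phi>p \<phi>m m)) * ennreal (gfun \<phi>p \<phi>m m) * indicator {max x 0..} m \<partial>lborel)"
    using gfun_nonpos[of _ \<phi>p \<phi>m] gfun_nonneg[OF ok]
    by (intro nn_integral_cong) (auto simp: indicator_def ennreal_mult)
  also have "\<dots> = ennreal (exp (- Dl \<phi>p \<phi>m (max x 0)))"
    by (rule I2[OF ok lim]) simp
  also have "\<dots> = emeasure \<nu> {x..}"
  proof (cases "x \<ge> 0")
    case True
    then show ?thesis using tail emeasure_eq_measure[of "{x..}"] by simp
  next
    case False
    have "emeasure \<nu> {0..} \<le> emeasure \<nu> {x..}"
      using False by (intro emeasure_mono) (auto simp: S)
    moreover have "emeasure \<nu> {0..} = 1"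
      using tail emeasure_eq_measure[of "{0..}"] Dl_nonpos[OF ok, of 0] by simp
    ultimately have "emeasure \<nu> {x..} = 1"
      using emeasure_le_1[of "{x..}"] by (metis antisym)
    then show ?thesis using False Dl_nonpos[OF ok, of 0] by simp
  qed
  finally show "emeasure \<nu> {x..} = emeasure (density lborel (\<lambda>m. ennreal (exp (- Dl \<phi>p \<phi>m m) * gfun \<phi>p \<phi>m m))) {x..}" ..
qed



lemma Sigma_facts:
  fixes \<phi>p \<phi>m F :: "real \<Rightarrow> real" and \<nu> :: "real measure"
  assumes ok: "phis_ok \<phi>p \<phi>m" and lim: "filterlim (Dl \<phi>p \<phi>m) at_top at_top"
    and P: "prob_space \<nu>" and S: "sets \<nu> = sets borel"
    and tail: "\<forall>l\<ge>0. measure \<nu> {l..} = exp (- Dl \<phi>p \<phi>m l)"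
    and cF: "convex_on {0..} F" and mF: "mono_on {0..} F"
    and intF: "set_integrable \<nu> {0..} (rderiv F)"
  defines "D \<equiv> Dl \<phi>p \<phi>m" and "g \<equiv> gfun \<phi>p \<phi>m" and "f \<equiv> rderiv F"
  defines "w \<equiv> \<lambda>u. exp (- D u) * g u" and "f0 \<equiv> \<lambda>u. if 0 \<le> u then f u else 0"
  defines "T \<equiv> \<lambda>l. LINT u|lborel. (if l \<le> u then w u * f0 u else 0)"
  defines "Sg \<equiv> \<lambda>l. exp (D l) * T l"
  shows "Sg \<in> borel_measurable borel"
    and "\<forall>l\<ge>0. (\<integral>m\<in>{l..}. f m \<partial>\<nu>) / measure \<nu> {l..} = Sg l"
    and "\<forall>l\<ge>0. f l \<le> Sg l"
    and "\<forall>l\<ge>0. Sg l \<le> Sg 0 * exp (D l)"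
    and "\<forall>l\<ge>0. (\<lambda>m. (Sg m - f m) * g m) integrable_on {0..l} \<and> integral {0..l} (\<lambda>m. (Sg m - f m) * g m) = Sg l - Sg 0"
proof -
  have nuD: "\<nu> = density lborel (\<lambda>m. ennreal (w m))"
    unfolding w_def D_def g_def by (rule nu_density[OF ok lim P S tail])
  have mD[measurable]: "D \<in> borel_measurable borel" unfolding D_def by (rule Dl_measurable[OF ok])
  have mg[measurable]: "g \<in> borel_measurable borel" unfolding g_def by (rule gfun_measurable[OF ok])
  have mw[measurable]: "w \<in> borel_measurable borel" unfolding w_def by measurable
  have gnn: "0 \<le> g u" for u unfolding g_def by (rule gfun_nonneg[OF ok])
  have wnn: "0 \<le> w u" for u unfolding w_def using gnn by simp
  have mf: "mono_on {0..} f" unfolding f_def by (rule rderiv_mono[OF cF mF])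
  have fnn: "0 \<le> f u" if "0 \<le> u" for u
    unfolding f_def using rderiv_bounds(3)[OF cF mF that, of "u+1"] by simp
  have f0nn: "0 \<le> f0 u" for u unfolding f0_def using fnn by simp
  have mono1: "mono (\<lambda>u. f (max u 0))" using mf by (auto simp: mono_def mono_on_def)
  have [measurable]: "(\<lambda>u. f (max u 0)) \<in> borel_measurable borel"
    by (rule borel_measurable_mono[OF mono1])
  have f0_eq: "f0 = (\<lambda>u. if 0 \<le> u then f (max u 0) else 0)"
    unfolding f0_def by (auto simp: fun_eq_iff max_def)
  have mf0[measurable]: "f0 \<in> borel_measurable borel" unfolding f0_eq by measurable
  have "integrable \<nu> (\<lambda>u. indicator {0..} u *\<^sub>R f u)" using intF unfolding set_integrable_def f_def .
  moreover have "(\<lambda>u. indicator {0..} u *\<^sub>R f u) = f0"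
    unfolding f0_def by (auto simp: fun_eq_iff indicator_def)
  ultimately have "integrable \<nu> f0" by simp
  then have "integrable (density lborel (\<lambda>m. ennreal (w m))) f0" using nuD by simp
  then have intwf0: "integrable lborel (\<lambda>u. w u * f0 u)"
    using integrable_density[of f0 lborel w] wnn by simp
  have intT: "integrable lborel (\<lambda>u. if l \<le> u then w u * f0 u else 0)" for l
    by (rule Bochner_Integration.integrable_bound[OF intwf0]) (use wnn f0nn in auto)
  have "(\<lambda>l. LINT u|lborel. (if l \<le> u then w u * f0 u else 0)) \<in> borel_measurable borel"
    by measurable
  then have mT[measurable]: "T \<in> borel_measurable borel" unfolding T_def .
  show "Sg \<in> borel_measurable borel" unfolding Sg_def by measurable
  have setint: "(\<integral>m\<in>{l..}. f m \<partial>\<nu>) = T l" if l: "0 \<le> l" for l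
  proof -
    have "(\<integral>m\<in>{l..}. f m \<partial>\<nu>) = integral\<^sup>L \<nu> (\<lambda>u. if l \<le> u then f0 u else 0)"
      unfolding set_lebesgue_integral_def using l
      by (intro Bochner_Integration.integral_cong) (auto simp: f0_def indicator_def)
    also have "\<dots> = integral\<^sup>L (density lborel (\<lambda>m. ennreal (w m))) (\<lambda>u. if l \<le> u then f0 u else 0)"
      using nuD by simp
    also have "\<dots> = (LINT u|lborel. w u *\<^sub>R (if l \<le> u then f0 u else 0))"
      by (rule integral_density) (use wnn in auto)
    also have "\<dots> = T l" unfolding T_def by (intro Bochner_Integration.integral_cong) auto
    finally show ?thesis .
  qed
  have I2r: "integrable lborel (\<lambda>u. if l \<le> u then w u else 0) \<and> (LINT u|lborel. (if l \<le> u then w u else 0)) = exp (- D l)" if l: "0 \<le> l" for l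
  proof -
    have "(\<integral>\<^sup>+ u. ennreal (if l \<le> u then w u else 0) \<partial>lborel)
        = (\<integral>\<^sup>+ m. ennreal (exp (- D m)) * ennreal (g m) * indicator {l..} m \<partial>lborel)"
      using gnn by (intro nn_integral_cong) (auto simp: w_def indicator_def ennreal_mult)
    also have "\<dots> = ennreal (exp (- D l))"
      unfolding D_def g_def by (rule I2[OF ok lim l])
    finally have "(\<integral>\<^sup>+ u. ennreal (if l \<le> u then w u else 0) \<partial>lborel) = ennreal (exp (- D l))" .
    then show ?thesis
      using nn_integral_eq_integrable[of "\<lambda>u. if l \<le> u then w u else 0" lborel "exp (- D l)"] wnn
      by auto
  qed
  have meas: "measure \<nu> {l..} = exp (- D l)" if "0 \<le> l" for l using tail that unfolding D_def by simp
  show "\<forall>l\<ge>0. (\<integral>m\<in>{l..}. f m \<partial>\<nu>) / measure \<nu> {l..} = Sg l"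
    using setint meas by (simp add: Sg_def exp_minus divide_inverse mult.commute)
  show "\<forall>l\<ge>0. f l \<le> Sg l"
  proof (intro allI impI)
    fix l :: real assume l: "0 \<le> l"
    have "(LINT u|lborel. (if l \<le> u then f l * w u else 0)) = (LINT u|lborel. f l * (if l \<le> u then w u else 0))"
      by (intro Bochner_Integration.integral_cong) auto
    also have "\<dots> = f l * (LINT u|lborel. (if l \<le> u then w u else 0))"
      by (rule integral_mult_right_zero)
    finally have eq1: "f l * exp (- D l) = (LINT u|lborel. (if l \<le> u then f l * w u else 0))"
      using I2r[OF l] by simp
    have iw: "integrable lborel (\<lambda>u. if l \<le> u then w u else 0)" using I2r[OF l] by simp
    have "(LINT u|lborel. (if l \<le> u then f l * w u else 0)) \<le> T l"
      unfolding T_def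
    proof (rule integral_mono)
      show "integrable lborel (\<lambda>u. if l \<le> u then f l * w u else 0)"
      proof -
        have "integrable lborel (\<lambda>u. f l * (if l \<le> u then w u else 0))"
          by (rule integrable_mult_right[OF iw])
        moreover have "(\<lambda>u. f l * (if l \<le> u then w u else 0)) = (\<lambda>u. if l \<le> u then f l * w u else 0)"
          by auto
        ultimately show ?thesis by simp
      qed
      show "integrable lborel (\<lambda>u. if l \<le> u then w u * f0 u else 0)" by (rule intT)
      fix u show "(if l \<le> u then f l * w u else 0) \<le> (if l \<le> u then w u * f0 u else 0)"
      proof (cases "l \<le> u")
        case True
        then have "f l \<le> f u" using mf l by (auto simp: mono_on_def)
        then have "f l * w u \<le> f u * w u" using wnn[of u] by (rule mult_right_mono)
        then show ?thesis using True l by (simp add: f0_def mult.commute)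
      qed simp
    qed
    then have "f l * exp (- D l) \<le> T l" using eq1 by simp
    then have A: "f l * exp (- D l) * exp (D l) \<le> T l * exp (D l)" by (rule mult_right_mono) simp
    have B: "f l * exp (- D l) * exp (D l) = f l" by (simp add: mult.assoc mult_exp_exp)
    have "f l \<le> T l * exp (D l)" using A unfolding B .
    then show "f l \<le> Sg l" by (simp add: Sg_def mult.commute)
  qed
  show "\<forall>l\<ge>0. Sg l \<le> Sg 0 * exp (D l)"
  proof (intro allI impI)
    fix l :: real assume l: "0 \<le> l"
    have "T l \<le> T 0"
      unfolding T_def
      by (rule integral_mono[OF intT intT]) (use l wnn fnn in \<open>auto simp: f0_def\<close>)
    moreover have "D 0 = 0" unfolding D_def by (rule Dl_nonpos[OF ok]) simp
    ultimately show "Sg l \<le> Sg 0 * exp (D l)" by (simp add: Sg_def mult.commute)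
  qed
  have D0: "D 0 = 0" unfolding D_def by (rule Dl_nonpos[OF ok]) simp
  have Dnn: "0 \<le> D u" for u unfolding D_def by (rule Dl_nonneg[OF ok])
  have Dmono: "D a \<le> D b" if "a \<le> b" for a b unfolding D_def by (rule Dl_mono[OF ok that])
  have wE: "w u * exp (D u) = g u" for u unfolding w_def by (simp add: mult.commute mult.assoc mult_exp_exp)
  have gneg: "g u = 0" if "u \<le> 0" for u unfolding g_def using that by (rule gfun_nonpos)
  show "\<forall>l\<ge>0. (\<lambda>m. (Sg m - f m) * g m) integrable_on {0..l} \<and> integral {0..l} (\<lambda>m. (Sg m - f m) * g m) = Sg l - Sg 0"
  proof (intro allI impI)
    fix l :: real assume l: "0 \<le> l"
    let ?E = "\<lambda>m. exp (D m)"
    let ?K = "\<lambda>m u. ennreal (?E m * g m * indicator {..l} m) * ennreal (if m \<le> u then w u * f0 u else 0)"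
    have Tnn: "ennreal (T m) = (\<integral>\<^sup>+ u. ennreal (if m \<le> u then w u * f0 u else 0) \<partial>lborel)" for m
      unfolding T_def using wnn f0nn
      by (intro nn_integral_eq_integral[symmetric] intT) auto
    have Tnn0: "0 \<le> T m" for m unfolding T_def using wnn f0nn by (intro integral_nonneg_AE) auto
    have step_b: "ennreal (Sg m * g m * indicator {..l} m) = (\<integral>\<^sup>+ u. ?K m u \<partial>lborel)" for m
    proof -
      have "ennreal (Sg m * g m * indicator {..l} m) = ennreal (?E m * g m * indicator {..l} m) * ennreal (T m)"
        unfolding Sg_def using gnn[of m] Tnn0[of m]
        by (subst ennreal_mult[symmetric]) (auto simp: mult_ac)
      also have "\<dots> = (\<integral>\<^sup>+ u. ?K m u \<partial>lborel)"
        unfolding Tnn by (rule nn_integral_cmult[symmetric]) measurable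
      finally show ?thesis .
    qed
    have step_e: "(\<integral>\<^sup>+ m. ?K m u \<partial>lborel) = ennreal (w u * f0 u * (?E (min l u) - 1))" for u
    proof (cases "0 \<le> u")
      case True
      have "?K m u = ennreal (w u * f0 u) * (ennreal (exp (D m)) * ennreal (g m) * indicator {..min l u} m)" for m
        using gnn[of m] wnn[of u] f0nn[of u]
        by (auto simp: indicator_def ennreal_mult[symmetric] mult_ac)
      then have "(\<integral>\<^sup>+ m. ?K m u \<partial>lborel) = (\<integral>\<^sup>+ m. ennreal (w u * f0 u) * (ennreal (exp (D m)) * ennreal (g m) * indicator {..min l u} m) \<partial>lborel)"
        by simp
      also have "\<dots> = ennreal (w u * f0 u) * (\<integral>\<^sup>+ m. ennreal (exp (D m)) * ennreal (g m) * indicator {..min l u} m \<partial>lborel)"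
        by (rule nn_integral_cmult) measurable
      also have "\<dots> = ennreal (w u * f0 u) * ennreal (?E (min l u) - 1)"
        unfolding D_def g_def using l True by (subst I1[OF ok lim]) auto
      also have "\<dots> = ennreal (w u * f0 u * (?E (min l u) - 1))"
        using wnn[of u] f0nn[of u] Dnn[of "min l u"] by (subst ennreal_mult) auto
      finally show ?thesis .
    next
      case False
      then have z: "f0 u = 0" by (simp add: f0_def)
      have "(\<lambda>m. ?K m u) = (\<lambda>m. 0)" by (rule ext) (simp add: z)
      then have "(\<integral>\<^sup>+ m. ?K m u \<partial>lborel) = (\<integral>\<^sup>+ m. 0 \<partial>(lborel :: real measure))" by (simp only:)
      then show ?thesis by (simp add: z)
    qed
    have mK: "(\<lambda>(m, u). ?K m u) \<in> borel_measurable (lborel \<Otimes>\<^sub>M lborel)" by measurable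
    have nnLHS: "(\<integral>\<^sup>+ m. ennreal (Sg m * g m * indicator {..l} m) \<partial>lborel)
        = (\<integral>\<^sup>+ u. ennreal (w u * f0 u * (?E (min l u) - 1)) \<partial>lborel)"
    proof -
      have "(\<integral>\<^sup>+ m. ennreal (Sg m * g m * indicator {..l} m) \<partial>lborel) = (\<integral>\<^sup>+ m. (\<integral>\<^sup>+ u. ?K m u \<partial>lborel) \<partial>lborel)"
        by (simp only: step_b)
      also have "\<dots> = (\<integral>\<^sup>+ u. (\<integral>\<^sup>+ m. ?K m u \<partial>lborel) \<partial>lborel)"
        by (rule lborel_pair.Fubini'[symmetric]) (use mK in simp)
      also have "\<dots> = (\<integral>\<^sup>+ u. ennreal (w u * f0 u * (?E (min l u) - 1)) \<partial>lborel)"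
        by (simp only: step_e)
      finally show ?thesis .
    qed
    have intR: "integrable lborel (\<lambda>u. w u * f0 u * (?E (min l u) - 1))"
    proof (rule Bochner_Integration.integrable_bound)
      show "integrable lborel (\<lambda>u. w u * f0 u * ?E l)" by (rule integrable_mult_left[OF intwf0])
      show "(\<lambda>u. w u * f0 u * (?E (min l u) - 1)) \<in> borel_measurable lborel" by measurable
      show "AE u in lborel. norm (w u * f0 u * (?E (min l u) - 1)) \<le> norm (w u * f0 u * ?E l)"
      proof (intro AE_I2)
        fix u
        have "D (min l u) \<le> D l" by (rule Dmono) simp
        then have "?E (min l u) \<le> ?E l" by (simp only: exp_le_cancel_iff)
        then have e1: "?E (min l u) - 1 \<le> ?E l" by linarith
        have e0: "0 \<le> ?E (min l u) - 1" using Dnn[of "min l u"] by simp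
        have p: "0 \<le> w u * f0 u" using wnn f0nn by simp
        show "norm (w u * f0 u * (?E (min l u) - 1)) \<le> norm (w u * f0 u * ?E l)"
        proof -
          have n1: "norm (w u * f0 u * (?E (min l u) - 1)) = w u * f0 u * (?E (min l u) - 1)"
            using e0 p by (simp only: real_norm_def abs_of_nonneg mult_nonneg_nonneg)
          have n2: "norm (w u * f0 u * ?E l) = w u * f0 u * ?E l"
            using p by (simp only: real_norm_def abs_of_nonneg mult_nonneg_nonneg exp_ge_zero)
          show ?thesis unfolding n1 n2 by (rule mult_left_mono[OF e1 p])
        qed
      qed
    qed
    have mSg[measurable]: "Sg \<in> borel_measurable borel" unfolding Sg_def by measurable
    have SgNN: "0 \<le> Sg m" for m unfolding Sg_def using Tnn0 by simp
    have intL: "integrable lborel (\<lambda>m. Sg m * g m * indicator {..l} m)"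
      and eqL: "(LINT m|lborel. Sg m * g m * indicator {..l} m) = (LINT u|lborel. w u * f0 u * (?E (min l u) - 1))"
    proof -
      have "(\<integral>\<^sup>+ u. ennreal (w u * f0 u * (?E (min l u) - 1)) \<partial>lborel) = ennreal (LINT u|lborel. w u * f0 u * (?E (min l u) - 1))"
        using Dnn wnn f0nn by (intro nn_integral_eq_integral intR) (auto intro!: AE_I2 mult_nonneg_nonneg)
      then have "(\<integral>\<^sup>+ m. ennreal (Sg m * g m * indicator {..l} m) \<partial>lborel) = ennreal (LINT u|lborel. w u * f0 u * (?E (min l u) - 1))"
        using nnLHS by simp
      moreover have "0 \<le> (LINT u|lborel. w u * f0 u * (?E (min l u) - 1))"
        using Dnn wnn f0nn by (intro integral_nonneg_AE) (auto intro!: AE_I2 mult_nonneg_nonneg)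
      ultimately have "integrable lborel (\<lambda>m. Sg m * g m * indicator {..l} m) \<and> (LINT m|lborel. Sg m * g m * indicator {..l} m) = (LINT u|lborel. w u * f0 u * (?E (min l u) - 1))"
        using SgNN gnn by (subst nn_integral_eq_integrable[symmetric]) (auto intro!: AE_I2)
      then show "integrable lborel (\<lambda>m. Sg m * g m * indicator {..l} m)"
        "(LINT m|lborel. Sg m * g m * indicator {..l} m) = (LINT u|lborel. w u * f0 u * (?E (min l u) - 1))" by auto
    qed
    let ?A = "\<lambda>u. if l \<le> u then w u * f0 u else 0"
    let ?B = "\<lambda>u. if 0 \<le> u then w u * f0 u else 0"
    let ?J = "\<lambda>u. if u < l then g u * f0 u else 0"
    have Rdec: "w u * f0 u * (?E (min l u) - 1) = ?E l * ?A u + ?J u - ?B u" for u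
    proof (cases "0 \<le> u")
      case False
      then show ?thesis using l by (simp add: f0_def)
    next
      case True
      show ?thesis
      proof (cases "l \<le> u")
        case True
        then show ?thesis using l by (simp add: algebra_simps min_def)
      next
        case False
        then have "min l u = u" by simp
        then show ?thesis using False \<open>0 \<le> u\<close> wE[of u] by (simp add: algebra_simps)
      qed
    qed
    have intJ: "integrable lborel ?J"
    proof (rule Bochner_Integration.integrable_bound)
      show "integrable lborel (\<lambda>u. w u * f0 u * ?E l)" by (rule integrable_mult_left[OF intwf0])
      show "?J \<in> borel_measurable lborel" by measurable
      show "AE u in lborel. norm (?J u) \<le> norm (w u * f0 u * ?E l)"
      proof (intro AE_I2)
        fix u
        have p: "0 \<le> w u * f0 u" using wnn f0nn by simp
        show "norm (?J u) \<le> norm (w u * f0 u * ?E l)"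
        proof (cases "u < l")
          case True
          have "D u \<le> D l" using True by (intro Dmono) simp
          then have "?E u \<le> ?E l" by (simp only: exp_le_cancel_iff)
          then have le: "w u * f0 u * ?E u \<le> w u * f0 u * ?E l" by (rule mult_left_mono[OF _ p])
          have ge: "g u * f0 u = w u * f0 u * ?E u" using wE[of u] by (simp add: mult_ac)
          have "0 \<le> g u * f0 u" using gnn f0nn by simp
          then have n1: "norm (?J u) = g u * f0 u" using True by simp
          have n2: "norm (w u * f0 u * ?E l) = w u * f0 u * ?E l" using p by simp
          show ?thesis using n1 n2 ge le by linarith
        next
          case False
          then show ?thesis by simp
        qed
      qed
    qed
    have intA: "integrable lborel ?A" by (rule intT)
    have intB: "integrable lborel ?B" by (rule intT)
    have "(LINT u|lborel. w u * f0 u * (?E (min l u) - 1)) = (LINT u|lborel. ?E l * ?A u + ?J u - ?B u)"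
      by (simp only: Rdec)
    also have "\<dots> = ?E l * T l + (LINT u|lborel. ?J u) - T 0"
      unfolding T_def using intA intB intJ by simp
    finally have main: "(LINT m|lborel. Sg m * g m * indicator {..l} m) = Sg l - Sg 0 + (LINT u|lborel. ?J u)"
      using eqL D0 by (simp add: Sg_def)
    have c1: "(\<lambda>m. indicator {0..l} m *\<^sub>R (Sg m * g m)) = (\<lambda>m. Sg m * g m * indicator {..l} m)"
      using gneg by (auto simp: fun_eq_iff indicator_def)
    have si1: "set_integrable lborel {0..l} (\<lambda>m. Sg m * g m)"
      unfolding set_integrable_def c1 by (rule intL)
    have e1: "(LINT m:{0..l}|lborel. Sg m * g m) = (LINT m|lborel. Sg m * g m * indicator {..l} m)"
      unfolding set_lebesgue_integral_def c1 ..
    have c2: "AE m in lborel. indicator {0..l} m *\<^sub>R (f m * g m) = ?J m"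
      using AE_lborel_singleton[of l]
    proof eventually_elim
      case (elim m)
      then show ?case using gneg[of m] by (auto simp: indicator_def f0_def)
    qed
    have "(\<lambda>m. indicator {0..l} m *\<^sub>R (f m * g m)) = (\<lambda>m. indicator {0..l} m *\<^sub>R (f (max m 0) * g m))"
      by (auto simp: fun_eq_iff indicator_def max_def)
    also have "\<dots> \<in> borel_measurable lborel" by measurable
    finally have mfg: "(\<lambda>m. indicator {0..l} m *\<^sub>R (f m * g m)) \<in> borel_measurable lborel" .
    have c2': "AE m in lborel. ?J m = indicator {0..l} m *\<^sub>R (f m * g m)"
      using c2 by (auto elim!: eventually_mono)
    have si2: "set_integrable lborel {0..l} (\<lambda>m. f m * g m)"
      unfolding set_integrable_def by (rule integrable_cong_AE_imp[OF intJ mfg c2'])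
    have mJ: "?J \<in> borel_measurable lborel" by measurable
    have e2: "(LINT m:{0..l}|lborel. f m * g m) = (LINT u|lborel. ?J u)"
      unfolding set_lebesgue_integral_def by (rule integral_cong_AE[OF mfg mJ c2])
    have h1: "(\<lambda>m. Sg m * g m) integrable_on {0..l}" "integral {0..l} (\<lambda>m. Sg m * g m) = Sg l - Sg 0 + (LINT u|lborel. ?J u)"
      using set_borel_integral_eq_integral[OF si1] e1 main by auto
    have h2: "(\<lambda>m. f m * g m) integrable_on {0..l}" "integral {0..l} (\<lambda>m. f m * g m) = (LINT u|lborel. ?J u)"
      using set_borel_integral_eq_integral[OF si2] e2 by auto
    have eqf: "(\<lambda>m. (Sg m - f m) * g m) = (\<lambda>m. Sg m * g m - f m * g m)" by (auto simp: algebra_simps)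
    show "(\<lambda>m. (Sg m - f m) * g m) integrable_on {0..l} \<and> integral {0..l} (\<lambda>m. (Sg m - f m) * g m) = Sg l - Sg 0"
      unfolding eqf using h1 h2 by (simp add: integral_diff integrable_diff)
  qed
qed


lemma Sigma_exists:
  fixes \<phi>p \<phi>m F :: "real \<Rightarrow> real" and \<nu> :: "real measure"
  assumes ok: "phis_ok \<phi>p \<phi>m" and lim: "filterlim (Dl \<phi>p \<phi>m) at_top at_top"
    and P: "prob_space \<nu>" and S: "sets \<nu> = sets borel"
    and tail: "\<forall>l\<ge>0. measure \<nu> {l..} = exp (- Dl \<phi>p \<phi>m l)"
    and cF: "convex_on {0..} F" and mF: "mono_on {0..} F"
    and intF: "set_integrable \<nu> {0..} (rderiv F)"
  shows "\<exists>Sg. Sg \<in> borel_measurable borel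
    \<and> (\<forall>l\<ge>0. (\<integral>m\<in>{l..}. rderiv F m \<partial>\<nu>) / measure \<nu> {l..} = Sg l)
    \<and> (\<forall>l\<ge>0. rderiv F l \<le> Sg l)
    \<and> (\<forall>l\<ge>0. Sg l \<le> Sg 0 * exp (Dl \<phi>p \<phi>m l))
    \<and> (\<forall>l\<ge>0. (\<lambda>m. (Sg m - rderiv F m) * gfun \<phi>p \<phi>m m) integrable_on {0..l}
          \<and> integral {0..l} (\<lambda>m. (Sg m - rderiv F m) * gfun \<phi>p \<phi>m m) = Sg l - Sg 0)"
proof -
  note SF = Sigma_facts[OF ok lim P S tail cF mF intF]
  show ?thesis
    by (rule exI, intro conjI, rule SF(1), rule SF(2), rule SF(3), rule SF(4), rule SF(5))
qed



lemma ereal_convex_SUP: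
  fixes h :: "'i \<Rightarrow> real \<Rightarrow> real"
  assumes conv: "\<And>i x y t. i \<in> I \<Longrightarrow> 0 \<le> t \<Longrightarrow> t \<le> 1 \<Longrightarrow> h i ((1 - t) * x + t * y) \<le> (1 - t) * h i x + t * h i y"
  shows "ereal_convex_on UNIV (\<lambda>x. SUP i\<in>I. ereal (h i x))"
  unfolding ereal_convex_on_def
proof (intro ballI allI impI)
  fix x y t :: real assume t: "0 \<le> t \<and> t \<le> 1"
  show "(SUP i\<in>I. ereal (h i ((1 - t) * x + t * y))) \<le> ereal (1 - t) * (SUP i\<in>I. ereal (h i x)) + ereal t * (SUP i\<in>I. ereal (h i y))"
  proof (rule SUP_least)
    fix i assume i: "i \<in> I"
    have "ereal (h i ((1 - t) * x + t * y)) \<le> ereal ((1 - t) * h i x + t * h i y)"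
      using conv[OF i] t by simp
    also have "\<dots> = ereal (1 - t) * ereal (h i x) + ereal t * ereal (h i y)" by simp
    also have "\<dots> \<le> ereal (1 - t) * (SUP i\<in>I. ereal (h i x)) + ereal t * (SUP i\<in>I. ereal (h i y))"
      using t i by (intro add_mono ereal_mult_left_mono SUP_upper) auto
    finally show "ereal (h i ((1 - t) * x + t * y)) \<le> ereal (1 - t) * (SUP i\<in>I. ereal (h i x)) + ereal t * (SUP i\<in>I. ereal (h i y))" .
  qed
qed

lemma ereal_convex_onD:
  assumes "ereal_convex_on UNIV H" "0 \<le> t" "t \<le> 1"
  shows "H ((1 - t) * x + t * y) \<le> ereal (1 - t) * H x + ereal t * H y"
  using assms unfolding ereal_convex_on_def by blast

lemma right_deriv_ge:
  fixes H :: "real \<Rightarrow> ereal"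
  assumes conv: "ereal_convex_on UNIV H" and Hy: "H y = ereal c"
    and low: "\<And>z. z > y \<Longrightarrow> ereal (c + A * (z - y)) \<le> H z"
  shows "ereal A \<le> ereal_right_deriv H y"
proof -
  let ?q = "\<lambda>z. (H z - H y) / ereal (z - y)"
  have qA: "ereal A \<le> ?q z" if z: "z > y" for z
  proof (cases "H z")
    case (real r)
    have "c + A * (z - y) \<le> r" using low[OF z] real by simp
    then have "A \<le> (r - c) / (z - y)" using z by (simp add: field_simps)
    then show ?thesis using real Hy z by simp
  next
    case PInf then show ?thesis using Hy z by simp
  next
    case MInf then show ?thesis using low[OF z] by simp
  qed
  have mono: "?q a \<le> ?q b" if ab: "y < a" "a \<le> b" for a b
  proof (cases "H b")
    case PInf then show ?thesis using Hy ab by simp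
  next
    case MInf then show ?thesis using low[of b] ab by simp
  next
    case (real r2)
    define t where "t = (a - y) / (b - y)"
    have t: "0 \<le> t" "t \<le> 1" using ab by (auto simp: t_def field_simps)
    have tb: "t * (b - y) = a - y" using ab by (simp add: t_def)
    have "(1 - t) * y + t * b = y + t * (b - y)" by (simp add: algebra_simps)
    then have a_eq: "a = (1 - t) * y + t * b" using tb by simp
    have "H a \<le> ereal (1 - t) * H y + ereal t * H b"
      unfolding a_eq by (rule ereal_convex_onD[OF conv t])
    then have Ha: "H a \<le> ereal ((1 - t) * c + t * r2)" using Hy real by simp
    obtain r1 where r1: "H a = ereal r1" using Ha low[of a] ab by (cases "H a") auto
    have "r1 \<le> (1 - t) * c + t * r2" using Ha r1 by simp
    then have "r1 - c \<le> t * (r2 - c)" by (simp add: algebra_simps)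
    then have "(r1 - c) / (a - y) \<le> (r2 - c) / (b - y)"
      using ab by (simp add: t_def field_simps)
    then show ?thesis using r1 real Hy ab by simp
  qed
  have "(?q \<longlongrightarrow> Inf (?q ` ({y<..} \<inter> UNIV))) (at y within ({y<..} \<inter> UNIV))"
    by (rule Lim_right_bound[where K="ereal A"]) (use mono qA in auto)
  then have lim: "(?q \<longlongrightarrow> Inf (?q ` {y<..})) (at_right y)" by simp
  then have "ereal_right_deriv H y = Inf (?q ` {y<..})"
    unfolding ereal_right_deriv_def by (intro tendsto_Lim) (auto simp: trivial_limit_at_right_real)
  moreover have "ereal A \<le> Inf (?q ` {y<..})" using qA by (auto intro: Inf_greatest)
  ultimately show ?thesis by simp
qed

lemma left_deriv_le:
  fixes H :: "real \<Rightarrow> ereal"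
  assumes conv: "ereal_convex_on UNIV H" and Hy: "H y = ereal c"
    and low: "\<And>z. z < y \<Longrightarrow> ereal (c + A * (z - y)) \<le> H z"
  shows "ereal_left_deriv H y \<le> ereal A"
proof -
  let ?q = "\<lambda>z. (H y - H z) / ereal (y - z)"
  have qA: "?q z \<le> ereal A" if z: "z < y" for z
  proof (cases "H z")
    case (real r)
    have "c + A * (z - y) \<le> r" using low[OF z] real by simp
    then have "(c - r) / (y - z) \<le> A" using z by (simp add: field_simps)
    then show ?thesis using real Hy z by simp
  next
    case PInf then show ?thesis using Hy z by simp
  next
    case MInf then show ?thesis using low[OF z] by simp
  qed
  have mono: "?q a \<le> ?q b" if ab: "a \<le> b" "b < y" for a b
  proof (cases "H a")
    case PInf then show ?thesis using Hy ab by simp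
  next
    case MInf then show ?thesis using low[of a] ab by simp
  next
    case (real r1)
    define t where "t = (b - a) / (y - a)"
    have t: "0 \<le> t" "t \<le> 1" "t < 1" using ab by (auto simp: t_def field_simps)
    have tb: "t * (y - a) = b - a" using ab by (simp add: t_def)
    have "(1 - t) * a + t * y = a + t * (y - a)" by (simp add: algebra_simps)
    then have b_eq: "b = (1 - t) * a + t * y" using tb by simp
    have "H b \<le> ereal (1 - t) * H a + ereal t * H y"
      unfolding b_eq by (rule ereal_convex_onD[OF conv t(1,2)])
    then have Hb: "H b \<le> ereal ((1 - t) * r1 + t * c)" using Hy real by simp
    obtain r2 where r2: "H b = ereal r2" using Hb low[of b] ab by (cases "H b") auto
    have "r2 \<le> (1 - t) * r1 + t * c" using Hb r2 by simp
    then have "(1 - t) * (c - r1) \<le> c - r2" by (simp add: algebra_simps)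
    have yb: "y - b = (1 - t) * (y - a)" using tb by (simp add: algebra_simps)
    have "(c - r1) / (y - a) = ((1 - t) * (c - r1)) / ((1 - t) * (y - a))"
      using t by simp
    also have "\<dots> = ((1 - t) * (c - r1)) / (y - b)" using yb by simp
    also have "\<dots> \<le> (c - r2) / (y - b)"
      using ab \<open>(1 - t) * (c - r1) \<le> c - r2\<close> by (intro divide_right_mono) auto
    finally have "(c - r1) / (y - a) \<le> (c - r2) / (y - b)" .
    then show ?thesis using r2 real Hy ab by simp
  qed
  have "(?q \<longlongrightarrow> Sup (?q ` ({..<y} \<inter> UNIV))) (at y within ({..<y} \<inter> UNIV))"
    by (rule Lim_left_bound[where K="ereal A"]) (use mono qA in auto)
  then have lim: "(?q \<longlongrightarrow> Sup (?q ` {..<y})) (at_left y)" by simp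
  then have "ereal_left_deriv H y = Sup (?q ` {..<y})"
    unfolding ereal_left_deriv_def by (intro tendsto_Lim) (auto simp: trivial_limit_at_left_real)
  moreover have "Sup (?q ` {..<y}) \<le> ereal A" using qA by (auto intro: Sup_least)
  ultimately show ?thesis by simp
qed

lemma integral_nonneg_open:
  fixes h :: "real \<Rightarrow> real"
  assumes "h integrable_on {a..b}" "\<And>u. a < u \<Longrightarrow> u < b \<Longrightarrow> 0 \<le> h u"
  shows "0 \<le> integral {a..b} h"
proof -
  have "0 \<le> integral {a<..<b} h"
    by (rule integral_nonneg) (use assms in \<open>auto simp: integrable_on_open_interval_real\<close>)
  then show ?thesis by (simp add: integral_open_interval_real)
qed

lemma integral_nonpos_open:
  fixes h :: "real \<Rightarrow> real"
  assumes "h integrable_on {a..b}" "\<And>u. a < u \<Longrightarrow> u < b \<Longrightarrow> h u \<le> 0"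
  shows "integral {a..b} h \<le> 0"
proof -
  have "0 \<le> integral {a..b} (\<lambda>u. - h u)"
    by (rule integral_nonneg_open) (use assms in \<open>auto intro: integrable_neg\<close>)
  then show ?thesis by (simp add: integral_neg assms(1))
qed



lemma set_integrable_dom_g:
  assumes ok: "phis_ok \<phi>p \<phi>m" and mk: "k \<in> borel_measurable borel"
    and bnd: "\<And>m. 0 < m \<Longrightarrow> m \<le> l \<Longrightarrow> \<bar>k m\<bar> \<le> B * gfun \<phi>p \<phi>m m"
  shows "set_integrable lborel {0..l} k"
proof -
  have si: "set_integrable lborel {0..l} (\<lambda>m. B * gfun \<phi>p \<phi>m m)"
    using g_set_integrable[OF ok] by (rule set_integrable_mult_right)
  show ?thesis
  proof (rule set_integrable_bound[OF si])
    show "set_borel_measurable lborel {0..l} k" unfolding set_borel_measurable_def using mk by measurable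
    show "AE x in lborel. x \<in> {0..l} \<longrightarrow> norm (k x) \<le> norm (B * gfun \<phi>p \<phi>m x)"
      using AE_lborel_singleton[of 0]
    proof eventually_elim
      case (elim x)
      show ?case
      proof
        assume "x \<in> {0..l}"
        then have "0 < x" "x \<le> l" using elim by auto
        then have "\<bar>k x\<bar> \<le> B * gfun \<phi>p \<phi>m x" by (rule bnd)
        then show "norm (k x) \<le> norm (B * gfun \<phi>p \<phi>m x)" by simp
      qed
    qed
  qed
qed

lemma set_integrable_dom_const:
  fixes k :: "real \<Rightarrow> real"
  assumes mk: "k \<in> borel_measurable borel" and bnd: "\<And>m. 0 \<le> m \<Longrightarrow> m \<le> l \<Longrightarrow> \<bar>k m\<bar> \<le> B"
  shows "set_integrable lborel {0..l} k"
proof -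
  have si: "set_integrable lborel {0..l} (\<lambda>m. B)"
    by (rule borel_integrable_atLeastAtMost') (rule continuous_on_const)
  show ?thesis
  proof (rule set_integrable_bound[OF si])
    show "set_borel_measurable lborel {0..l} k" unfolding set_borel_measurable_def using mk by measurable
    show "AE x in lborel. x \<in> {0..l} \<longrightarrow> norm (k x) \<le> norm B"
      by (intro AE_I2 impI) (use bnd in \<open>force\<close>)
  qed
qed

lemma two_inv_id:
  fixes a b d :: real
  assumes "a > 0" "b > 0"
  shows "2 * (d * (inverse (2 * a) + inverse (2 * b))) = d / a + d / b"
  using assms by (simp add: field_simps)

lemma main_part1:
  fixes \<phi>p \<phi>m F :: "real \<Rightarrow> real" and \<nu> :: "real measure"
    and \<Delta> \<Sigma> \<delta> Ap Am C \<Gamma> \<psi>p \<psi>m :: "real \<Rightarrow> real" and H :: "real \<Rightarrow> ereal"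
  assumes phip_mono: "mono_on {0..} \<phi>p" and phip_nonneg: "\<forall>l\<ge>0. 0 \<le> \<phi>p l"
    and phim_anti: "antimono_on {0..} \<phi>m" and phim_nonpos: "\<forall>l\<ge>0. \<phi>m l \<le> 0"
    and F_convex: "convex_on {0..} F" and F_mono: "mono_on {0..} F"
    and Delta_finite: "\<forall>l>0. (\<integral>\<^sup>+ m \<in> {0..l}. (inverse (2 * ennreal (\<phi>p m))
                                  + inverse (2 * ennreal \<bar>\<phi>m m\<bar>)) \<partial>lborel) < \<infinity>"
    and Delta_def: "\<Delta> \<equiv> \<lambda>l. enn2real (\<integral>\<^sup>+ m \<in> {0..l}. (inverse (2 * ennreal (\<phi>p m))
                                  + inverse (2 * ennreal \<bar>\<phi>m m\<bar>)) \<partial>lborel)"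
    and Delta_lim: "filterlim \<Delta> at_top at_top"
    and nu_prob: "prob_space \<nu>" and nu_sets: "sets \<nu> = sets borel"
    and nu_tail: "\<forall>l\<ge>0. measure \<nu> {l..} = exp (- \<Delta> l)"
    and F'_integrable: "set_integrable \<nu> {0..} (rderiv F)"
    and Sigma_def: "\<Sigma> \<equiv> \<lambda>l. (\<integral>m\<in>{l..}. rderiv F m \<partial>\<nu>) / measure \<nu> {l..}"
    and delta_def: "\<delta> \<equiv> \<lambda>l. \<Sigma> l - rderiv F l"
    and Ap_def: "Ap \<equiv> \<lambda>l. \<Sigma> 0 + (\<integral>m\<in>{0..l}. \<delta> m / \<phi>p m \<partial>lborel)"
    and Am_def: "Am \<equiv> \<lambda>l. - \<Sigma> 0 - (\<integral>m\<in>{0..l}. \<delta> m / \<bar>\<phi>m m\<bar> \<partial>lborel)"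
    and C_def: "C \<equiv> \<lambda>l. - F 0 + (\<integral>m\<in>{0..l}. \<delta> m \<partial>lborel)"
    and Gamma_def: "\<Gamma> \<equiv> \<lambda>l. (\<integral>m\<in>{0..l}. (Ap m - Am m) / 2 \<partial>lborel)"
  shows "phis_ok \<phi>p \<phi>m"
    and "\<forall>l\<ge>0. 0 \<le> \<delta> l"
    and "0 \<le> \<Sigma> 0"
    and "\<forall>l\<ge>0. Ap l = \<Sigma> 0 + integral {0..l} (\<lambda>m. \<delta> m / \<phi>p m) \<and> (\<lambda>m. \<delta> m / \<phi>p m) integrable_on {0..l}"
    and "\<forall>l\<ge>0. Am l = - \<Sigma> 0 - integral {0..l} (\<lambda>m. \<delta> m / \<bar>\<phi>m m\<bar>) \<and> (\<lambda>m. \<delta> m / \<bar>\<phi>m m\<bar>) integrable_on {0..l}"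
    and "\<forall>l\<ge>0. C l = - F 0 + integral {0..l} \<delta> \<and> \<delta> integrable_on {0..l}"
    and "\<forall>l\<ge>0. F l = \<Gamma> l - C l"
proof -
  show ok: "phis_ok \<phi>p \<phi>m"
    unfolding phis_ok_def Gfun_def using phip_mono phip_nonneg phim_anti phim_nonpos Delta_finite by blast
  have DD: "\<Delta> = Dl \<phi>p \<phi>m" unfolding Delta_def Dl_def Gfun_def ..
  have lim: "filterlim (Dl \<phi>p \<phi>m) at_top at_top" using Delta_lim DD by simp
  have tail: "\<forall>l\<ge>0. measure \<nu> {l..} = exp (- Dl \<phi>p \<phi>m l)" using nu_tail DD by simp
  obtain Sg where Sgm[measurable]: "Sg \<in> borel_measurable borel"
    and SgS: "\<forall>l\<ge>0. (\<integral>m\<in>{l..}. rderiv F m \<partial>\<nu>) / measure \<nu> {l..} = Sg l"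
    and fSg: "\<forall>l\<ge>0. rderiv F l \<le> Sg l"
    and Sgb: "\<forall>l\<ge>0. Sg l \<le> Sg 0 * exp (Dl \<phi>p \<phi>m l)"
    and SgB: "\<forall>l\<ge>0. (\<lambda>m. (Sg m - rderiv F m) * gfun \<phi>p \<phi>m m) integrable_on {0..l}
          \<and> integral {0..l} (\<lambda>m. (Sg m - rderiv F m) * gfun \<phi>p \<phi>m m) = Sg l - Sg 0"
    using Sigma_exists[OF ok lim nu_prob nu_sets tail F_convex F_mono F'_integrable] by blast
  have Seq: "\<Sigma> l = Sg l" if "0 \<le> l" for l using SgS that by (simp add: Sigma_def)
  have deq: "\<delta> l = Sg l - rderiv F l" if "0 \<le> l" for l using Seq[OF that] by (simp add: delta_def)
  have fnn: "0 \<le> rderiv F l" if "0 \<le> l" for l using rderiv_bounds(3)[OF F_convex F_mono that, of "l+1"] by simp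
  show dnn: "\<forall>l\<ge>0. 0 \<le> \<delta> l" using deq fSg by simp
  have Sg0: "0 \<le> Sg 0" using fSg fnn[of 0] by force
  show "0 \<le> \<Sigma> 0" using Sg0 Seq[of 0] by simp
  have Dmono: "Dl \<phi>p \<phi>m a \<le> Dl \<phi>p \<phi>m b" if "a \<le> b" for a b by (rule Dl_mono[OF ok that])
  have SgB': "Sg m \<le> Sg 0 * exp (Dl \<phi>p \<phi>m l)" if "0 \<le> m" "m \<le> l" for m l
  proof -
    have "exp (Dl \<phi>p \<phi>m m) \<le> exp (Dl \<phi>p \<phi>m l)" using Dmono[OF that(2)] by simp
    then have "Sg 0 * exp (Dl \<phi>p \<phi>m m) \<le> Sg 0 * exp (Dl \<phi>p \<phi>m l)" using Sg0 by (rule mult_left_mono)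
    then show ?thesis using Sgb that(1) by force
  qed
  have dbound: "\<delta> m \<le> Sg 0 * exp (Dl \<phi>p \<phi>m l)" if "0 \<le> m" "m \<le> l" for m l
    using deq[OF that(1)] fnn[OF that(1)] SgB'[OF that] by simp
  have m1: "mono (\<lambda>m. \<phi>p (max m 0))" using phip_mono by (auto simp: mono_def mono_on_def)
  have mpp[measurable]: "(\<lambda>m. \<phi>p (max m 0)) \<in> borel_measurable borel" by (rule borel_measurable_mono[OF m1])
  have m2: "mono (\<lambda>m. - \<phi>m (max m 0))" using phim_anti by (auto simp: mono_def monotone_on_def)
  have "(\<lambda>m. - \<phi>m (max m 0)) \<in> borel_measurable borel" by (rule borel_measurable_mono[OF m2])
  from borel_measurable_uminus[OF this]
  have mpm[measurable]: "(\<lambda>m. \<phi>m (max m 0)) \<in> borel_measurable borel" by simp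
  have m3: "mono (\<lambda>m. rderiv F (max m 0))" using rderiv_mono[OF F_convex F_mono] by (auto simp: mono_def mono_on_def)
  have mfm[measurable]: "(\<lambda>m. rderiv F (max m 0)) \<in> borel_measurable borel" by (rule borel_measurable_mono[OF m3])
  have mg[measurable]: "gfun \<phi>p \<phi>m \<in> borel_measurable borel" by (rule gfun_measurable[OF ok])
  define k1 where "k1 = (\<lambda>m. (Sg m - rderiv F (max m 0)) / \<phi>p (max m 0))"
  define k2 where "k2 = (\<lambda>m. (Sg m - rderiv F (max m 0)) / \<bar>\<phi>m (max m 0)\<bar>)"
  define k3 where "k3 = (\<lambda>m. Sg m - rderiv F (max m 0))"
  have mk1: "k1 \<in> borel_measurable borel" unfolding k1_def by measurable
  have mk2: "k2 \<in> borel_measurable borel" unfolding k2_def by measurable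
  have mk3: "k3 \<in> borel_measurable borel" unfolding k3_def by measurable
  have k1e: "\<delta> m / \<phi>p m = k1 m" if "0 \<le> m" for m using deq[OF that] that by (simp add: k1_def max_def)
  have k2e: "\<delta> m / \<bar>\<phi>m m\<bar> = k2 m" if "0 \<le> m" for m using deq[OF that] that by (simp add: k2_def max_def)
  have k3e: "\<delta> m = k3 m" if "0 \<le> m" for m using deq[OF that] that by (simp add: k3_def max_def)
  have si1: "set_integrable lborel {0..l} (\<lambda>m. \<delta> m / \<phi>p m)" for l
  proof -
    have "set_integrable lborel {0..l} k1"
    proof (rule set_integrable_dom_g[OF ok mk1])
      fix m assume m: "0 < m" "m \<le> l"
      have pp: "\<phi>p m > 0" using phis_pos[OF ok m(1)] by simp
      have nn: "0 \<le> \<delta> m / \<phi>p m" using dnn m(1) pp by simp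
      have "\<bar>k1 m\<bar> = \<delta> m / \<phi>p m" using k1e[of m] m(1) nn by simp
      also have "\<dots> \<le> Sg 0 * exp (Dl \<phi>p \<phi>m l) / \<phi>p m"
        using dbound[of m l] m pp by (intro divide_right_mono) auto
      also have "\<dots> = (2 * (Sg 0 * exp (Dl \<phi>p \<phi>m l))) * inverse (2 * \<phi>p m)"
        by (simp add: field_simps)
      also have "\<dots> \<le> (2 * (Sg 0 * exp (Dl \<phi>p \<phi>m l))) * gfun \<phi>p \<phi>m m"
        using m Sg0 by (intro mult_left_mono) (auto simp: gfun_def)
      finally show "\<bar>k1 m\<bar> \<le> (2 * (Sg 0 * exp (Dl \<phi>p \<phi>m l))) * gfun \<phi>p \<phi>m m" .
    qed
    then show ?thesis by (rule set_integrable_cong[THEN iffD1, rotated 3]) (auto simp: k1e)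
  qed
  show "\<forall>l\<ge>0. Ap l = \<Sigma> 0 + integral {0..l} (\<lambda>m. \<delta> m / \<phi>p m) \<and> (\<lambda>m. \<delta> m / \<phi>p m) integrable_on {0..l}"
    using set_borel_integral_eq_integral[OF si1] by (simp add: Ap_def)
  have si2: "set_integrable lborel {0..l} (\<lambda>m. \<delta> m / \<bar>\<phi>m m\<bar>)" for l
  proof -
    have "set_integrable lborel {0..l} k2"
    proof (rule set_integrable_dom_g[OF ok mk2])
      fix m assume m: "0 < m" "m \<le> l"
      have pp: "\<bar>\<phi>m m\<bar> > 0" using phis_pos(2)[OF ok m(1)] by simp
      have nn: "0 \<le> \<delta> m / \<bar>\<phi>m m\<bar>" using dnn m(1) pp by simp
      have "\<bar>k2 m\<bar> = \<delta> m / \<bar>\<phi>m m\<bar>" using k2e[of m] m(1) nn by simp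
      also have "\<dots> \<le> Sg 0 * exp (Dl \<phi>p \<phi>m l) / \<bar>\<phi>m m\<bar>"
        using dbound[of m l] m pp by (intro divide_right_mono) auto
      also have "\<dots> = (2 * (Sg 0 * exp (Dl \<phi>p \<phi>m l))) * inverse (2 * \<bar>\<phi>m m\<bar>)"
        by (simp add: field_simps)
      also have "\<dots> \<le> (2 * (Sg 0 * exp (Dl \<phi>p \<phi>m l))) * gfun \<phi>p \<phi>m m"
      proof (rule mult_left_mono)
        have "0 \<le> inverse (2 * \<phi>p m)" using phis_pos(1)[OF ok m(1)] by simp
        then show "inverse (2 * \<bar>\<phi>m m\<bar>) \<le> gfun \<phi>p \<phi>m m" using m(1) by (simp add: gfun_def)
      qed (use Sg0 in simp)
      finally show "\<bar>k2 m\<bar> \<le> (2 * (Sg 0 * exp (Dl \<phi>p \<phi>m l))) * gfun \<phi>p \<phi>m m" .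
    qed
    then show ?thesis by (rule set_integrable_cong[THEN iffD1, rotated 3]) (auto simp: k2e)
  qed
  show "\<forall>l\<ge>0. Am l = - \<Sigma> 0 - integral {0..l} (\<lambda>m. \<delta> m / \<bar>\<phi>m m\<bar>) \<and> (\<lambda>m. \<delta> m / \<bar>\<phi>m m\<bar>) integrable_on {0..l}"
    using set_borel_integral_eq_integral[OF si2] by (simp add: Am_def)
  have si3: "set_integrable lborel {0..l} \<delta>" for l
  proof -
    have "set_integrable lborel {0..l} k3"
    proof (rule set_integrable_dom_const[OF mk3])
      fix m assume m: "0 \<le> m" "m \<le> l"
      have "0 \<le> \<delta> m" using dnn m(1) by simp
      then have "0 \<le> k3 m" using k3e[OF m(1)] by simp
      then show "\<bar>k3 m\<bar> \<le> Sg 0 * exp (Dl \<phi>p \<phi>m l)" using k3e[OF m(1)] dbound[OF m] by simp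
    qed
    then show ?thesis by (rule set_integrable_cong[THEN iffD1, rotated 3]) (auto simp: k3e)
  qed
  have Cl: "\<forall>l\<ge>0. C l = - F 0 + integral {0..l} \<delta> \<and> \<delta> integrable_on {0..l}"
    using set_borel_integral_eq_integral[OF si3] by (simp add: C_def)
  then show "\<forall>l\<ge>0. C l = - F 0 + integral {0..l} \<delta> \<and> \<delta> integrable_on {0..l}" .
  have siS: "set_integrable lborel {0..l} Sg" for l
  proof (rule set_integrable_dom_const[OF Sgm])
    fix m assume m: "0 \<le> m" "m \<le> l"
    have "0 \<le> Sg m" using fSg fnn[OF m(1)] m(1) by force
    then show "\<bar>Sg m\<bar> \<le> Sg 0 * exp (Dl \<phi>p \<phi>m l)" using SgB'[OF m] by simp
  qed
  have ApAm: "Ap m - Am m = 2 * Sg m" if m: "0 \<le> m" for m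
  proof -
    have i1: "(\<lambda>u. \<delta> u / \<phi>p u) integrable_on {0..m}" and i2: "(\<lambda>u. \<delta> u / \<bar>\<phi>m u\<bar>) integrable_on {0..m}"
      using set_borel_integral_eq_integral(1)[OF si1] set_borel_integral_eq_integral(1)[OF si2] by auto
    have "integral {0..m} (\<lambda>u. \<delta> u / \<phi>p u) + integral {0..m} (\<lambda>u. \<delta> u / \<bar>\<phi>m u\<bar>)
        = integral {0..m} (\<lambda>u. \<delta> u / \<phi>p u + \<delta> u / \<bar>\<phi>m u\<bar>)"
      by (rule integral_add[OF i1 i2, symmetric])
    also have "\<dots> = integral {0..m} (\<lambda>u. 2 * ((Sg u - rderiv F u) * gfun \<phi>p \<phi>m u))"
    proof (rule integral_spike[where S="{0}"])
      fix u assume u: "u \<in> {0..m} - {0}"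
      then have u0: "u > 0" by auto
      have a: "\<phi>p u > 0" "\<phi>m u < 0" using phis_pos[OF ok u0] by auto
      show "2 * ((Sg u - rderiv F u) * gfun \<phi>p \<phi>m u) = \<delta> u / \<phi>p u + \<delta> u / \<bar>\<phi>m u\<bar>"
      proof -
        have "Sg u - rderiv F u = \<delta> u" using deq[of u] u0 by simp
        moreover have "\<bar>\<phi>m u\<bar> > 0" using a by simp
        ultimately show ?thesis using two_inv_id[OF a(1) \<open>\<bar>\<phi>m u\<bar> > 0\<close>, of "\<delta> u"] u0
          by (simp add: gfun_def)
      qed
    qed simp
    also have "\<dots> = 2 * (Sg m - Sg 0)" using SgB m by simp
    finally have "integral {0..m} (\<lambda>u. \<delta> u / \<phi>p u) + integral {0..m} (\<lambda>u. \<delta> u / \<bar>\<phi>m u\<bar>) = 2 * (Sg m - Sg 0)" .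
    then show ?thesis
      using set_borel_integral_eq_integral(2)[OF si1] set_borel_integral_eq_integral(2)[OF si2] Seq[of 0]
      by (simp add: Ap_def Am_def)
  qed
  show "\<forall>l\<ge>0. F l = \<Gamma> l - C l"
  proof (intro allI impI)
    fix l :: real assume l: "0 \<le> l"
    have "\<Gamma> l = (LINT m:{0..l}|lborel. Sg m)"
      unfolding Gamma_def using ApAm by (intro set_lebesgue_integral_cong) auto
    also have "\<dots> = integral {0..l} Sg" by (rule set_borel_integral_eq_integral(2)[OF siS])
    finally have G: "\<Gamma> l = integral {0..l} Sg" .
    have iS: "Sg integrable_on {0..l}" by (rule set_borel_integral_eq_integral(1)[OF siS])
    have iF: "rderiv F integrable_on {0..l}" by (rule convex_FTC(1)[OF F_convex F_mono l])
    have "integral {0..l} \<delta> = integral {0..l} (\<lambda>m. Sg m - rderiv F m)"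
      using deq by (intro integral_cong) auto
    also have "\<dots> = integral {0..l} Sg - integral {0..l} (rderiv F)"
      by (rule integral_diff[OF iS iF])
    finally have "integral {0..l} \<delta> = integral {0..l} Sg - integral {0..l} (rderiv F)" .
    then show "F l = \<Gamma> l - C l"
      using Cl l G convex_FTC(2)[OF F_convex F_mono l] by simp
  qed
qed



lemma SUP_at_right0:
  fixes Ob :: "real \<Rightarrow> real"
  assumes "(Ob \<longlongrightarrow> Ob 0) (at_right 0)"
  shows "(SUP l\<in>{0<..}. ereal (Ob l)) = (SUP l\<in>{0..}. ereal (Ob l))"
proof (rule antisym)
  show "(SUP l\<in>{0<..}. ereal (Ob l)) \<le> (SUP l\<in>{0..}. ereal (Ob l))"
    by (rule SUP_subset_mono) auto
  show "(SUP l\<in>{0..}. ereal (Ob l)) \<le> (SUP l\<in>{0<..}. ereal (Ob l))"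
  proof (rule SUP_least)
    fix l :: real assume l: "l \<in> {0..}"
    show "ereal (Ob l) \<le> (SUP l\<in>{0<..}. ereal (Ob l))"
    proof (cases "l = 0")
      case False
      then show ?thesis using l by (intro SUP_upper) auto
    next
      case True
      have "((\<lambda>l. ereal (Ob l)) \<longlongrightarrow> ereal (Ob 0)) (at_right 0)" using assms by (rule tendsto_ereal)
      moreover have "eventually (\<lambda>i. (SUP l\<in>{0<..}. ereal (Ob l)) \<ge> ereal (Ob i)) (at_right (0::real))"
        unfolding eventually_at_right_field by (intro exI[of _ 1]) (auto intro: SUP_upper)
      ultimately show ?thesis using True by (intro tendsto_upperbound) (auto simp: trivial_limit_at_right_real)
    qed
  qed
qed

lemma max_affine_convex:
  fixes x y t a b c :: real
  assumes t: "0 \<le> t" "t \<le> 1"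
  shows "max (((1 - t) * x + t * y) * a - c) (((1 - t) * x + t * y) * b - c)
       \<le> (1 - t) * max (x * a - c) (x * b - c) + t * max (y * a - c) (y * b - c)"
proof -
  have t1: "0 \<le> 1 - t" using t by simp
  have A: "((1 - t) * x + t * y) * a - c = (1 - t) * (x * a - c) + t * (y * a - c)" by (simp add: algebra_simps)
  have B: "((1 - t) * x + t * y) * b - c = (1 - t) * (x * b - c) + t * (y * b - c)" by (simp add: algebra_simps)
  have "(1 - t) * (x * a - c) + t * (y * a - c) \<le> (1 - t) * max (x * a - c) (x * b - c) + t * max (y * a - c) (y * b - c)"
    by (intro add_mono mult_left_mono t1 t) auto
  moreover have "(1 - t) * (x * b - c) + t * (y * b - c) \<le> (1 - t) * max (x * a - c) (x * b - c) + t * max (y * a - c) (y * b - c)"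
    by (intro add_mono mult_left_mono t1 t) auto
  ultimately show ?thesis unfolding A B by simp
qed

lemma main_part2:
  fixes \<phi>p \<phi>m Ap Am C \<delta> \<psi>p \<psi>m :: "real \<Rightarrow> real" and s0 F0 :: real and H :: "real \<Rightarrow> ereal"
  assumes ok: "phis_ok \<phi>p \<phi>m"
    and dnn: "\<forall>l\<ge>0. 0 \<le> \<delta> l" and s0: "0 \<le> s0"
    and hAp: "\<forall>l\<ge>0. Ap l = s0 + integral {0..l} (\<lambda>m. \<delta> m / \<phi>p m) \<and> (\<lambda>m. \<delta> m / \<phi>p m) integrable_on {0..l}"
    and hAm: "\<forall>l\<ge>0. Am l = - s0 - integral {0..l} (\<lambda>m. \<delta> m / \<bar>\<phi>m m\<bar>) \<and> (\<lambda>m. \<delta> m / \<bar>\<phi>m m\<bar>) integrable_on {0..l}"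
    and hC: "\<forall>l\<ge>0. C l = - F0 + integral {0..l} \<delta> \<and> \<delta> integrable_on {0..l}"
    and H_def: "H \<equiv> \<lambda>x. if x > 0 then (SUP l\<in>{0<..}. ereal (x * Ap l - C l))
                      else if x = 0 then ereal F0
                      else (SUP l\<in>{0<..}. ereal (x * Am l - C l))"
    and psip_def: "\<psi>p \<equiv> \<lambda>x. Inf {l. 0 \<le> l \<and> x < \<phi>p l}"
    and psim_def: "\<psi>m \<equiv> \<lambda>x. Inf {l. 0 \<le> l \<and> \<phi>m l \<le> x}"
  shows "ereal_convex_on UNIV H
    \<and> (\<forall>x>0. if (\<exists>l\<ge>0. x < \<phi>p l)
               then H x = ereal (x * Ap (\<psi>p x) - C (\<psi>p x))
               else ((\<lambda>l. ereal (x * Ap l - C l)) \<longlongrightarrow> H x) at_top)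
    \<and> (\<forall>x<0. if (\<exists>l\<ge>0. \<phi>m l \<le> x)
               then H x = ereal (x * Am (\<psi>m x) - C (\<psi>m x))
               else ((\<lambda>l. ereal (x * Am l - C l)) \<longlongrightarrow> H x) at_top)
    \<and> (\<forall>l\<ge>0. ereal (Ap l) \<le> ereal_right_deriv H (Lim (at_right l) \<phi>p)
             \<and> ereal_left_deriv H (Lim (at_right l) \<phi>m) \<le> ereal (Am l))
    \<and> (\<forall>l>0. ereal_left_deriv H (Lim (at_left l) \<phi>p) \<le> ereal (Ap l)
             \<and> ereal (Am l) \<le> ereal_right_deriv H (Lim (at_left l) \<phi>m))"
    and "\<forall>l\<ge>0. H (\<phi>p l) = ereal (\<phi>p l * Ap l - C l) \<and> H (\<phi>m l) = ereal (\<phi>m l * Am l - C l)"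
proof -
  have mp: "mono_on {0..} \<phi>p" and pp: "\<forall>l\<ge>0. 0 \<le> \<phi>p l" and am: "antimono_on {0..} \<phi>m"
    and nm: "\<forall>l\<ge>0. \<phi>m l \<le> 0" using ok unfolding phis_ok_def by auto
  have ppos: "\<phi>p u > 0" if "u > 0" for u using phis_pos(1)[OF ok that] .
  have mneg: "\<phi>m u < 0" if "u > 0" for u using phis_pos(2)[OF ok that] .
  have mpD: "\<phi>p a \<le> \<phi>p b" if "0 \<le> a" "a \<le> b" for a b using mp that by (auto simp: mono_on_def)
  have amD: "\<phi>m b \<le> \<phi>m a" if "0 \<le> a" "a \<le> b" for a b using am that by (auto simp: monotone_on_def)
  let ?h1 = "\<lambda>m. \<delta> m / \<phi>p m" and ?h2 = "\<lambda>m. \<delta> m / \<bar>\<phi>m m\<bar>"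
  have i1: "?h1 integrable_on {a..b}" if "0 \<le> a" for a b
  proof (cases "a \<le> b")
    case True
    have "?h1 integrable_on {0..b}" using hAp True that by auto
    then show ?thesis by (rule integrable_subinterval_real) (use that in auto)
  qed (simp add: integrable_on_empty)
  have i2: "?h2 integrable_on {a..b}" if "0 \<le> a" for a b
  proof (cases "a \<le> b")
    case True
    have "?h2 integrable_on {0..b}" using hAm True that by auto
    then show ?thesis by (rule integrable_subinterval_real) (use that in auto)
  qed (simp add: integrable_on_empty)
  have i3: "\<delta> integrable_on {a..b}" if "0 \<le> a" for a b
  proof (cases "a \<le> b")
    case True
    have "\<delta> integrable_on {0..b}" using hC True that by auto
    then show ?thesis by (rule integrable_subinterval_real) (use that in auto)
  qed (simp add: integrable_on_empty)
  have Ap0: "Ap 0 = s0" and Am0: "Am 0 = - s0" and C0: "C 0 = - F0" using hAp hAm hC by auto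
  have h1nn: "0 \<le> ?h1 m" if "0 \<le> m" for m using dnn pp that by simp
  have h2nn: "0 \<le> ?h2 m" if "0 \<le> m" for m using dnn that by simp
  have Apge: "s0 \<le> Ap l" if "0 \<le> l" for l
    using hAp that integral_nonneg[OF i1[of 0 l]] h1nn by auto
  have Amle: "Am l \<le> - s0" if "0 \<le> l" for l
    using hAm that integral_nonneg[OF i2[of 0 l]] h2nn by auto
  have Cge: "- F0 \<le> C l" if "0 \<le> l" for l
    using hC that integral_nonneg[OF i3[of 0 l]] dnn by auto
  have dAp: "Ap b - Ap a = integral {a..b} ?h1" if "0 \<le> a" "a \<le> b" for a b
    using Henstock_Kurzweil_Integration.integral_combine[where a=0 and c=a and b=b and f="?h1"] hAp that i1[of 0 b] by force
  have dAm: "Am b - Am a = - integral {a..b} ?h2" if "0 \<le> a" "a \<le> b" for a b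
    using Henstock_Kurzweil_Integration.integral_combine[where a=0 and c=a and b=b and f="?h2"] hAm that i2[of 0 b] by force
  have dC: "C b - C a = integral {a..b} \<delta>" if "0 \<le> a" "a \<le> b" for a b
    using Henstock_Kurzweil_Integration.integral_combine[where a=0 and c=a and b=b and f="\<delta>"] hC that i3[of 0 b] by force
  have dOp: "(x * Ap b - C b) - (x * Ap a - C a) = integral {a..b} (\<lambda>u. x * ?h1 u - \<delta> u)" if "0 \<le> a" "a \<le> b" for x a b
  proof -
    have c1: "(\<lambda>u. x * ?h1 u) integrable_on {a..b}" using integrable_on_cmult_left[OF i1[OF that(1)], of x] by simp
    have "integral {a..b} (\<lambda>u. x * ?h1 u - \<delta> u) = integral {a..b} (\<lambda>u. x * ?h1 u) - integral {a..b} \<delta>"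
      by (rule integral_diff[OF c1 i3[OF that(1)]])
    also have "integral {a..b} (\<lambda>u. x * ?h1 u) = x * integral {a..b} ?h1"
      by (rule integral_mult[OF i1[OF that(1)], symmetric])
    finally have E: "integral {a..b} (\<lambda>u. x * ?h1 u - \<delta> u) = x * integral {a..b} ?h1 - integral {a..b} \<delta>" .
    have "x * (Ap b - Ap a) = x * integral {a..b} ?h1" using dAp[OF that] by simp
    then have "x * Ap b - x * Ap a = x * integral {a..b} ?h1" by (simp add: algebra_simps)
    then show ?thesis using E dC[OF that] by linarith
  qed
  have dOm: "(x * Am b - C b) - (x * Am a - C a) = integral {a..b} (\<lambda>u. - x * ?h2 u - \<delta> u)" if "0 \<le> a" "a \<le> b" for x a b
  proof -
    have c1: "(\<lambda>u. - x * ?h2 u) integrable_on {a..b}" using integrable_on_cmult_left[OF i2[OF that(1)], of "- x"] by simp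
    have "integral {a..b} (\<lambda>u. - x * ?h2 u - \<delta> u) = integral {a..b} (\<lambda>u. - x * ?h2 u) - integral {a..b} \<delta>"
      by (rule integral_diff[OF c1 i3[OF that(1)]])
    also have "integral {a..b} (\<lambda>u. - x * ?h2 u) = - x * integral {a..b} ?h2"
      by (rule integral_mult[OF i2[OF that(1)], symmetric])
    finally have E: "integral {a..b} (\<lambda>u. - x * ?h2 u - \<delta> u) = - x * integral {a..b} ?h2 - integral {a..b} \<delta>" .
    have "x * (Am b - Am a) = x * (- integral {a..b} ?h2)" using dAm[OF that] by simp
    then have "x * Am b - x * Am a = - x * integral {a..b} ?h2" by (simp add: algebra_simps)
    then show ?thesis using E dC[OF that] by linarith
  qed
  have iOp: "(\<lambda>u. x * ?h1 u - \<delta> u) integrable_on {a..b}" if "0 \<le> a" for x a b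
    using integrable_diff[OF integrable_on_cmult_left[OF i1[OF that], of x] i3[OF that]] by simp
  have iOm: "(\<lambda>u. - x * ?h2 u - \<delta> u) integrable_on {a..b}" if "0 \<le> a" for x a b
    using integrable_diff[OF integrable_on_cmult_left[OF i2[OF that], of "- x"] i3[OF that]] by simp
  have MAXp: "x * Ap m - C m \<le> x * Ap l0 - C l0"
    if l0: "0 \<le> l0" and lo: "\<And>m. 0 \<le> m \<Longrightarrow> m < l0 \<Longrightarrow> \<phi>p m \<le> x" and hi: "\<And>m. l0 < m \<Longrightarrow> x \<le> \<phi>p m"
      and m: "0 \<le> m" for x l0 m
  proof (cases "m \<le> l0")
    case True
    have "0 \<le> integral {m..l0} (\<lambda>u. x * ?h1 u - \<delta> u)"
    proof (rule integral_nonneg_open[OF iOp[OF m]])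
      fix u assume u: "m < u" "u < l0"
      then have u0: "u > 0" using m by simp
      have "x * ?h1 u - \<delta> u = \<delta> u * (x - \<phi>p u) / \<phi>p u" using ppos[OF u0] by (simp add: field_simps)
      moreover have "0 \<le> \<delta> u * (x - \<phi>p u) / \<phi>p u"
        using dnn u0 lo[of u] u ppos[OF u0] by (intro divide_nonneg_pos mult_nonneg_nonneg) auto
      ultimately show "0 \<le> x * ?h1 u - \<delta> u" by simp
    qed
    then show ?thesis using dOp[OF m True, of x] by simp
  next
    case False
    have "integral {l0..m} (\<lambda>u. x * ?h1 u - \<delta> u) \<le> 0"
    proof (rule integral_nonpos_open[OF iOp[OF l0]])
      fix u assume u: "l0 < u" "u < m"
      then have u0: "u > 0" using l0 by simp
      have "x * ?h1 u - \<delta> u = \<delta> u * (x - \<phi>p u) / \<phi>p u" using ppos[OF u0] by (simp add: field_simps)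
      moreover have "\<delta> u * (x - \<phi>p u) / \<phi>p u \<le> 0"
        using dnn u0 hi[of u] u ppos[OF u0] by (intro divide_nonpos_pos mult_nonneg_nonpos) auto
      ultimately show "x * ?h1 u - \<delta> u \<le> 0" by simp
    qed
    then show ?thesis using dOp[OF l0, of m x] False by simp
  qed
  have MAXm: "x * Am m - C m \<le> x * Am l0 - C l0"
    if l0: "0 \<le> l0" and lo: "\<And>m. 0 \<le> m \<Longrightarrow> m < l0 \<Longrightarrow> x \<le> \<phi>m m" and hi: "\<And>m. l0 < m \<Longrightarrow> \<phi>m m \<le> x"
      and m: "0 \<le> m" for x l0 m
  proof (cases "m \<le> l0")
    case True
    have "0 \<le> integral {m..l0} (\<lambda>u. - x * ?h2 u - \<delta> u)"
    proof (rule integral_nonneg_open[OF iOm[OF m]])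
      fix u assume u: "m < u" "u < l0"
      then have u0: "u > 0" using m by simp
      have "- x * ?h2 u - \<delta> u = \<delta> u * (\<phi>m u - x) / \<bar>\<phi>m u\<bar>" using mneg[OF u0] by (simp add: field_simps)
      moreover have "0 \<le> \<delta> u * (\<phi>m u - x) / \<bar>\<phi>m u\<bar>"
        using dnn u0 lo[of u] u mneg[OF u0] by (intro divide_nonneg_pos mult_nonneg_nonneg) auto
      ultimately show "0 \<le> - x * ?h2 u - \<delta> u" by simp
    qed
    then show ?thesis using dOm[OF m True, of x] by simp
  next
    case False
    have "integral {l0..m} (\<lambda>u. - x * ?h2 u - \<delta> u) \<le> 0"
    proof (rule integral_nonpos_open[OF iOm[OF l0]])
      fix u assume u: "l0 < u" "u < m"
      then have u0: "u > 0" using l0 by simp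
      have "- x * ?h2 u - \<delta> u = \<delta> u * (\<phi>m u - x) / \<bar>\<phi>m u\<bar>" using mneg[OF u0] by (simp add: field_simps)
      moreover have "\<delta> u * (\<phi>m u - x) / \<bar>\<phi>m u\<bar> \<le> 0"
        using dnn u0 hi[of u] u mneg[OF u0] by (intro divide_nonpos_pos mult_nonneg_nonpos) auto
      ultimately show "- x * ?h2 u - \<delta> u \<le> 0" by simp
    qed
    then show ?thesis using dOm[OF l0, of m x] False by simp
  qed
  have contI: "continuous_on {0..1} (\<lambda>l. integral {0..l} h)" if "h integrable_on {0..1}" for h :: "real \<Rightarrow> real"
    by (rule indefinite_integral_continuous_1[OF that])
  have cAp: "continuous_on {0..1} Ap"
  proof (rule continuous_on_eq)
    show "continuous_on {0..1} (\<lambda>l. s0 + integral {0..l} ?h1)"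
      by (intro continuous_intros contI i1) simp
    show "\<And>l. l \<in> {0..1} \<Longrightarrow> s0 + integral {0..l} ?h1 = Ap l" using hAp by auto
  qed
  have cAm: "continuous_on {0..1} Am"
  proof (rule continuous_on_eq)
    show "continuous_on {0..1} (\<lambda>l. - s0 - integral {0..l} ?h2)"
      by (intro continuous_intros contI i2) simp
    show "\<And>l. l \<in> {0..1} \<Longrightarrow> - s0 - integral {0..l} ?h2 = Am l" using hAm by auto
  qed
  have cC: "continuous_on {0..1} C"
  proof (rule continuous_on_eq)
    show "continuous_on {0..1} (\<lambda>l. - F0 + integral {0..l} \<delta>)"
      by (intro continuous_intros contI i3) simp
    show "\<And>l. l \<in> {0..1} \<Longrightarrow> - F0 + integral {0..l} \<delta> = C l" using hC by auto
  qed
  have tOp: "((\<lambda>l. x * Ap l - C l) \<longlongrightarrow> x * Ap 0 - C 0) (at_right 0)" for x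
  proof -
    have "continuous_on {0..1} (\<lambda>l. x * Ap l - C l)" by (intro continuous_intros cAp cC)
    then have "((\<lambda>l. x * Ap l - C l) \<longlongrightarrow> x * Ap 0 - C 0) (at 0 within {0..1})"
      by (auto simp: continuous_on_def)
    then show ?thesis by (simp add: at_within_Icc_at_right)
  qed
  have tOm: "((\<lambda>l. x * Am l - C l) \<longlongrightarrow> x * Am 0 - C 0) (at_right 0)" for x
  proof -
    have "continuous_on {0..1} (\<lambda>l. x * Am l - C l)" by (intro continuous_intros cAm cC)
    then have "((\<lambda>l. x * Am l - C l) \<longlongrightarrow> x * Am 0 - C 0) (at 0 within {0..1})"
      by (auto simp: continuous_on_def)
    then show ?thesis by (simp add: at_within_Icc_at_right)
  qed
  have AmAp: "Am l \<le> Ap l" if "0 \<le> l" for l using Amle[OF that] Apge[OF that] s0 by linarith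
  have maxp: "max (z * Ap l - C l) (z * Am l - C l) = z * Ap l - C l" if "0 \<le> z" "0 \<le> l" for z l
    using mult_left_mono[OF AmAp[OF that(2)] that(1)] by simp
  have maxm: "max (z * Ap l - C l) (z * Am l - C l) = z * Am l - C l" if "z \<le> 0" "0 \<le> l" for z l
    using mult_left_mono_neg[OF AmAp[OF that(2)] that(1)] by simp
  let ?K = "\<lambda>z. SUP l\<in>{0..}. ereal (max (z * Ap l - C l) (z * Am l - C l))"
  have R1: "H z = ?K z" for z
  proof (cases "z > 0")
    case True
    then have "H z = (SUP l\<in>{0<..}. ereal (z * Ap l - C l))" by (simp add: H_def)
    also have "\<dots> = (SUP l\<in>{0..}. ereal (z * Ap l - C l))" by (rule SUP_at_right0[OF tOp])
    also have "\<dots> = ?K z" using maxp True by (intro SUP_cong) auto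
    finally show ?thesis .
  next
    case False
    show ?thesis
    proof (cases "z = 0")
      case True
      have "?K z = (SUP l\<in>{0..}. ereal (- C l))" using True by simp
      also have "\<dots> = ereal F0"
      proof (rule antisym)
        show "(SUP l\<in>{0..}. ereal (- C l)) \<le> ereal F0"
        proof (rule SUP_least)
          fix l :: real assume "l \<in> {0..}"
          then have "- F0 \<le> C l" using Cge by simp
          then show "ereal (- C l) \<le> ereal F0" by simp
        qed
        show "ereal F0 \<le> (SUP l\<in>{0..}. ereal (- C l))"
          using C0 by (intro SUP_upper2[of 0]) auto
      qed
      finally show ?thesis using True by (simp add: H_def)
    next
      case False
      then have zn: "z < 0" using \<open>\<not> z > 0\<close> by simp
      then have "H z = (SUP l\<in>{0<..}. ereal (z * Am l - C l))" by (simp add: H_def)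
      also have "\<dots> = (SUP l\<in>{0..}. ereal (z * Am l - C l))" by (rule SUP_at_right0[OF tOm])
      also have "\<dots> = ?K z" using maxm zn by (intro SUP_cong) auto
      finally show ?thesis .
    qed
  qed
  have Heq: "H = ?K" using R1 by (simp add: fun_eq_iff)
  have conv: "ereal_convex_on UNIV H"
    unfolding Heq by (rule ereal_convex_SUP) (rule max_affine_convex)
  have lowP: "ereal (z * Ap l - C l) \<le> H z" if "0 \<le> l" for z l
    unfolding R1 using that by (intro SUP_upper2[of l]) auto
  have lowM: "ereal (z * Am l - C l) \<le> H z" if "0 \<le> l" for z l
    unfolding R1 using that by (intro SUP_upper2[of l]) auto
  have HvalP: "H y = ereal (y * Ap l0 - C l0)"
    if y: "0 \<le> y" and l0: "0 \<le> l0" and lo: "\<And>m. 0 \<le> m \<Longrightarrow> m < l0 \<Longrightarrow> \<phi>p m \<le> y"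
      and hi: "\<And>m. l0 < m \<Longrightarrow> y \<le> \<phi>p m" for y l0
  proof (rule antisym)
    show "ereal (y * Ap l0 - C l0) \<le> H y" by (rule lowP[OF l0])
    show "H y \<le> ereal (y * Ap l0 - C l0)"
      unfolding R1
    proof (rule SUP_least)
      fix l :: real assume l: "l \<in> {0..}"
      then show "ereal (max (y * Ap l - C l) (y * Am l - C l)) \<le> ereal (y * Ap l0 - C l0)"
        using maxp[OF y, of l] MAXp[OF l0 lo hi, of l] by auto
    qed
  qed
  have HvalM: "H y = ereal (y * Am l0 - C l0)"
    if y: "y \<le> 0" and l0: "0 \<le> l0" and lo: "\<And>m. 0 \<le> m \<Longrightarrow> m < l0 \<Longrightarrow> y \<le> \<phi>m m"
      and hi: "\<And>m. l0 < m \<Longrightarrow> \<phi>m m \<le> y" for y l0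
  proof (rule antisym)
    show "ereal (y * Am l0 - C l0) \<le> H y" by (rule lowM[OF l0])
    show "H y \<le> ereal (y * Am l0 - C l0)"
      unfolding R1
    proof (rule SUP_least)
      fix l :: real assume l: "l \<in> {0..}"
      then show "ereal (max (y * Ap l - C l) (y * Am l - C l)) \<le> ereal (y * Am l0 - C l0)"
        using maxm[OF y, of l] MAXm[OF l0 lo hi, of l] by auto
    qed
  qed
  have lowP': "ereal ((y * Ap l - C l) + Ap l * (z - y)) \<le> H z" if "0 \<le> l" for y z l
  proof -
    have e: "(y * Ap l - C l) + Ap l * (z - y) = z * Ap l - C l" by (simp add: algebra_simps)
    show ?thesis unfolding e by (rule lowP[OF that])
  qed
  have lowM': "ereal ((y * Am l - C l) + Am l * (z - y)) \<le> H z" if "0 \<le> l" for y z l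
  proof -
    have e: "(y * Am l - C l) + Am l * (z - y) = z * Am l - C l" by (simp add: algebra_simps)
    show ?thesis unfolding e by (rule lowM[OF that])
  qed
  have P2: "\<forall>x>0. if (\<exists>l\<ge>0. x < \<phi>p l)
               then H x = ereal (x * Ap (\<psi>p x) - C (\<psi>p x))
               else ((\<lambda>l. ereal (x * Ap l - C l)) \<longlongrightarrow> H x) at_top"
  proof (intro allI impI)
    fix x :: real assume x: "x > 0"
    show "if (\<exists>l\<ge>0. x < \<phi>p l) then H x = ereal (x * Ap (\<psi>p x) - C (\<psi>p x))
          else ((\<lambda>l. ereal (x * Ap l - C l)) \<longlongrightarrow> H x) at_top"
    proof (cases "\<exists>l\<ge>0. x < \<phi>p l")
      case True
      define S where "S = {l. 0 \<le> l \<and> x < \<phi>p l}"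
      have ne: "S \<noteq> {}" using True by (auto simp: S_def)
      have bdd: "bdd_below S" by (rule bdd_belowI[of _ 0]) (auto simp: S_def)
      have psi: "\<psi>p x = Inf S" by (simp add: psip_def S_def)
      have l0: "0 \<le> Inf S" by (rule cInf_greatest[OF ne]) (auto simp: S_def)
      have lo: "\<phi>p m \<le> x" if "0 \<le> m" "m < Inf S" for m
      proof (rule ccontr)
        assume "\<not> \<phi>p m \<le> x"
        then have "m \<in> S" using that by (auto simp: S_def)
        then have "Inf S \<le> m" by (rule cInf_lower[OF _ bdd])
        then show False using that by simp
      qed
      have hi: "x \<le> \<phi>p m" if mm: "Inf S < m" for m
      proof -
        obtain l where l: "l \<in> S" "l < m" using cInf_lessD[OF ne mm] by blast
        then have "\<phi>p l \<le> \<phi>p m" using mpD[of l m] by (auto simp: S_def)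
        then show ?thesis using l by (auto simp: S_def)
      qed
      have "H x = ereal (x * Ap (Inf S) - C (Inf S))"
        by (rule HvalP[OF _ l0 lo hi]) (use x in auto)
      then show ?thesis unfolding if_P[OF True] psi .
    next
      case False
      then have le: "\<phi>p l \<le> x" if "0 \<le> l" for l using that by force
      have monoO: "x * Ap a - C a \<le> x * Ap b - C b" if "0 \<le> a" "a \<le> b" for a b
      proof -
        have "0 \<le> integral {a..b} (\<lambda>u. x * ?h1 u - \<delta> u)"
        proof (rule integral_nonneg_open[OF iOp[OF that(1)]])
          fix u assume u: "a < u" "u < b"
          then have u0: "u > 0" using that by simp
          have "x * ?h1 u - \<delta> u = \<delta> u * (x - \<phi>p u) / \<phi>p u" using ppos[OF u0] by (simp add: field_simps)
          moreover have "0 \<le> \<delta> u * (x - \<phi>p u) / \<phi>p u"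
            using dnn u0 le[of u] ppos[OF u0] by (intro divide_nonneg_pos mult_nonneg_nonneg) auto
          ultimately show "0 \<le> x * ?h1 u - \<delta> u" by simp
        qed
        then show ?thesis using dOp[OF that, of x] by simp
      qed
      have Hx: "H x = (SUP l\<in>{0..}. ereal (x * Ap l - C l))"
        unfolding R1 using maxp x by (intro SUP_cong) auto
      have "((\<lambda>l. ereal (x * Ap l - C l)) \<longlongrightarrow> H x) at_top"
      proof (rule increasing_tendsto)
        show "eventually (\<lambda>l. ereal (x * Ap l - C l) \<le> H x) at_top"
          unfolding eventually_at_top_linorder by (intro exI[of _ 0]) (auto intro: lowP)
        fix y assume "y < H x"
        then obtain l1 where l1: "l1 \<in> {0..}" "y < ereal (x * Ap l1 - C l1)"
          unfolding Hx less_SUP_iff by blast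
        show "eventually (\<lambda>l. y < ereal (x * Ap l - C l)) at_top"
          unfolding eventually_at_top_linorder
        proof (intro exI[of _ l1] allI impI)
          fix l assume "l1 \<le> l"
          then have "x * Ap l1 - C l1 \<le> x * Ap l - C l" using l1 by (intro monoO) auto
          then show "y < ereal (x * Ap l - C l)" using l1 by (metis ereal_less_eq(3) order_less_le_trans)
        qed
      qed
      then show ?thesis unfolding if_not_P[OF False] .
    qed
  qed
  have P3: "\<forall>x<0. if (\<exists>l\<ge>0. \<phi>m l \<le> x)
               then H x = ereal (x * Am (\<psi>m x) - C (\<psi>m x))
               else ((\<lambda>l. ereal (x * Am l - C l)) \<longlongrightarrow> H x) at_top"
  proof (intro allI impI)
    fix x :: real assume x: "x < 0"
    show "if (\<exists>l\<ge>0. \<phi>m l \<le> x) then H x = ereal (x * Am (\<psi>m x) - C (\<psi>m x))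
          else ((\<lambda>l. ereal (x * Am l - C l)) \<longlongrightarrow> H x) at_top"
    proof (cases "\<exists>l\<ge>0. \<phi>m l \<le> x")
      case True
      define S where "S = {l. 0 \<le> l \<and> \<phi>m l \<le> x}"
      have ne: "S \<noteq> {}" using True by (auto simp: S_def)
      have bdd: "bdd_below S" by (rule bdd_belowI[of _ 0]) (auto simp: S_def)
      have psi: "\<psi>m x = Inf S" by (simp add: psim_def S_def)
      have l0: "0 \<le> Inf S" by (rule cInf_greatest[OF ne]) (auto simp: S_def)
      have lo: "x \<le> \<phi>m m" if "0 \<le> m" "m < Inf S" for m
      proof (rule ccontr)
        assume "\<not> x \<le> \<phi>m m"
        then have "m \<in> S" using that by (auto simp: S_def)
        then have "Inf S \<le> m" by (rule cInf_lower[OF _ bdd])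
        then show False using that by simp
      qed
      have hi: "\<phi>m m \<le> x" if mm: "Inf S < m" for m
      proof -
        obtain l where l: "l \<in> S" "l < m" using cInf_lessD[OF ne mm] by blast
        then have "\<phi>m m \<le> \<phi>m l" using amD[of l m] by (auto simp: S_def)
        then show ?thesis using l by (auto simp: S_def)
      qed
      have "H x = ereal (x * Am (Inf S) - C (Inf S))"
        by (rule HvalM[OF _ l0 lo hi]) (use x in auto)
      then show ?thesis unfolding if_P[OF True] psi .
    next
      case False
      then have le: "x < \<phi>m l" if "0 \<le> l" for l using that by force
      have monoO: "x * Am a - C a \<le> x * Am b - C b" if "0 \<le> a" "a \<le> b" for a b
      proof -
        have "0 \<le> integral {a..b} (\<lambda>u. - x * ?h2 u - \<delta> u)"
        proof (rule integral_nonneg_open[OF iOm[OF that(1)]])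
          fix u assume u: "a < u" "u < b"
          then have u0: "u > 0" using that by simp
          have "- x * ?h2 u - \<delta> u = \<delta> u * (\<phi>m u - x) / \<bar>\<phi>m u\<bar>" using mneg[OF u0] by (simp add: field_simps)
          moreover have "0 \<le> \<delta> u * (\<phi>m u - x) / \<bar>\<phi>m u\<bar>"
            using dnn u0 le[of u] mneg[OF u0] by (intro divide_nonneg_pos mult_nonneg_nonneg) auto
          ultimately show "0 \<le> - x * ?h2 u - \<delta> u" by simp
        qed
        then show ?thesis using dOm[OF that, of x] by simp
      qed
      have Hx: "H x = (SUP l\<in>{0..}. ereal (x * Am l - C l))"
        unfolding R1 using maxm x by (intro SUP_cong) auto
      have "((\<lambda>l. ereal (x * Am l - C l)) \<longlongrightarrow> H x) at_top"
      proof (rule increasing_tendsto)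
        show "eventually (\<lambda>l. ereal (x * Am l - C l) \<le> H x) at_top"
          unfolding eventually_at_top_linorder by (intro exI[of _ 0]) (auto intro: lowM)
        fix y assume "y < H x"
        then obtain l1 where l1: "l1 \<in> {0..}" "y < ereal (x * Am l1 - C l1)"
          unfolding Hx less_SUP_iff by blast
        show "eventually (\<lambda>l. y < ereal (x * Am l - C l)) at_top"
          unfolding eventually_at_top_linorder
        proof (intro exI[of _ l1] allI impI)
          fix l assume "l1 \<le> l"
          then have "x * Am l1 - C l1 \<le> x * Am l - C l" using l1 by (intro monoO) auto
          then show "y < ereal (x * Am l - C l)" using l1 by (metis ereal_less_eq(3) order_less_le_trans)
        qed
      qed
      then show ?thesis unfolding if_not_P[OF False] .
    qed
  qed
  have P4: "\<forall>l\<ge>0. ereal (Ap l) \<le> ereal_right_deriv H (Lim (at_right l) \<phi>p)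
             \<and> ereal_left_deriv H (Lim (at_right l) \<phi>m) \<le> ereal (Am l)"
  proof (intro allI impI conjI)
    fix l :: real assume l: "0 \<le> l"
    have ne: "\<phi>p ` {l<..} \<noteq> {}" by simp
    have "(\<phi>p \<longlongrightarrow> Inf (\<phi>p ` ({l<..} \<inter> {0..}))) (at l within ({l<..} \<inter> {0..}))"
      by (rule Lim_right_bound[where K="\<phi>p l"]) (use mpD l in auto)
    moreover have "{l<..} \<inter> {0..} = {l<..}" using l by auto
    ultimately have tp: "(\<phi>p \<longlongrightarrow> Inf (\<phi>p ` {l<..})) (at_right l)" by simp
    define y where "y = Inf (\<phi>p ` {l<..})"
    have Ly: "Lim (at_right l) \<phi>p = y"
      unfolding y_def by (rule tendsto_Lim[OF _ tp]) (simp add: trivial_limit_at_right_real)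
    have bddp: "bdd_below (\<phi>p ` {l<..})" by (rule bdd_belowI[of _ "\<phi>p l"]) (use mpD l in auto)
    have lo: "\<phi>p m \<le> y" if "0 \<le> m" "m \<le> l" for m
      unfolding y_def by (rule cInf_greatest[OF ne]) (use mpD that in force)
    have hi: "y \<le> \<phi>p m" if "l < m" for m
      unfolding y_def using that by (intro cInf_lower[OF _ bddp]) auto
    have y0: "0 \<le> y" using lo[OF l order_refl] pp l by force
    have Hy: "H y = ereal (y * Ap l - C l)"
      by (rule HvalP[OF y0 l]) (use lo hi in auto)
    show "ereal (Ap l) \<le> ereal_right_deriv H (Lim (at_right l) \<phi>p)"
      unfolding Ly by (rule right_deriv_ge[OF conv Hy]) (rule lowP'[OF l])
    have ne': "(\<lambda>m. - \<phi>m m) ` {l<..} \<noteq> {}" by simp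
    have "((\<lambda>m. - \<phi>m m) \<longlongrightarrow> Inf ((\<lambda>m. - \<phi>m m) ` ({l<..} \<inter> {0..}))) (at l within ({l<..} \<inter> {0..}))"
      by (rule Lim_right_bound[where K="- \<phi>m l"]) (use amD l in auto)
    moreover have "{l<..} \<inter> {0..} = {l<..}" using l by auto
    ultimately have tm: "((\<lambda>m. - \<phi>m m) \<longlongrightarrow> Inf ((\<lambda>m. - \<phi>m m) ` {l<..})) (at_right l)" by simp
    define I where "I = Inf ((\<lambda>m. - \<phi>m m) ` {l<..})"
    have tm': "(\<phi>m \<longlongrightarrow> - I) (at_right l)"
      using tendsto_minus[OF tm] unfolding I_def by simp
    have Lym: "Lim (at_right l) \<phi>m = - I"
      by (rule tendsto_Lim[OF _ tm']) (simp add: trivial_limit_at_right_real)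
    have bddm: "bdd_below ((\<lambda>m. - \<phi>m m) ` {l<..})" by (rule bdd_belowI[of _ "- \<phi>m l"]) (use amD l in auto)
    have lo': "- I \<le> \<phi>m m" if "0 \<le> m" "m \<le> l" for m
    proof -
      have "- \<phi>m m \<le> I" unfolding I_def by (rule cInf_greatest[OF ne']) (use amD that in force)
      then show ?thesis by simp
    qed
    have hi': "\<phi>m m \<le> - I" if "l < m" for m
    proof -
      have "I \<le> - \<phi>m m" unfolding I_def using that by (intro cInf_lower[OF _ bddm]) auto
      then show ?thesis by simp
    qed
    have ym: "- I \<le> 0" using lo'[OF l order_refl] nm l by force
    have Hym: "H (- I) = ereal (- I * Am l - C l)"
      by (rule HvalM[OF ym l]) (use lo' hi' in auto)
    show "ereal_left_deriv H (Lim (at_right l) \<phi>m) \<le> ereal (Am l)"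
      unfolding Lym by (rule left_deriv_le[OF conv Hym]) (rule lowM'[OF l])
  qed
  have P5: "\<forall>l>0. ereal_left_deriv H (Lim (at_left l) \<phi>p) \<le> ereal (Ap l)
             \<and> ereal (Am l) \<le> ereal_right_deriv H (Lim (at_left l) \<phi>m)"
  proof (intro allI impI conjI)
    fix l :: real assume lpos: "0 < l"
    then have l: "0 \<le> l" by simp
    have filt: "at l within ({..<l} \<inter> {0..}) = at_left l"
      by (rule at_within_nhd[where S="{0<..}"]) (use lpos in auto)
    have ne: "\<phi>p ` ({..<l} \<inter> {0..}) \<noteq> {}" using lpos by auto
    have "(\<phi>p \<longlongrightarrow> Sup (\<phi>p ` ({..<l} \<inter> {0..}))) (at l within ({..<l} \<inter> {0..}))"
      by (rule Lim_left_bound[where K="\<phi>p l"]) (use mpD in auto)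
    then have tp: "(\<phi>p \<longlongrightarrow> Sup (\<phi>p ` ({..<l} \<inter> {0..}))) (at_left l)" unfolding filt .
    define y where "y = Sup (\<phi>p ` ({..<l} \<inter> {0..}))"
    have Ly: "Lim (at_left l) \<phi>p = y"
      unfolding y_def by (rule tendsto_Lim[OF _ tp]) (simp add: trivial_limit_at_left_real)
    have bddp: "bdd_above (\<phi>p ` ({..<l} \<inter> {0..}))" by (rule bdd_aboveI[of _ "\<phi>p l"]) (use mpD in auto)
    have lo: "\<phi>p m \<le> y" if "0 \<le> m" "m < l" for m
      unfolding y_def using that by (intro cSup_upper[OF _ bddp]) auto
    have hi: "y \<le> \<phi>p m" if "l \<le> m" for m
      unfolding y_def by (rule cSup_least[OF ne]) (use mpD that lpos in force)
    have y0: "0 \<le> y" using lo[of 0] lpos pp by force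
    have Hy: "H y = ereal (y * Ap l - C l)"
      by (rule HvalP[OF y0 l]) (use lo hi in auto)
    show "ereal_left_deriv H (Lim (at_left l) \<phi>p) \<le> ereal (Ap l)"
      unfolding Ly by (rule left_deriv_le[OF conv Hy]) (rule lowP'[OF l])
    have ne': "(\<lambda>m. - \<phi>m m) ` ({..<l} \<inter> {0..}) \<noteq> {}" using lpos by auto
    have "((\<lambda>m. - \<phi>m m) \<longlongrightarrow> Sup ((\<lambda>m. - \<phi>m m) ` ({..<l} \<inter> {0..}))) (at l within ({..<l} \<inter> {0..}))"
      by (rule Lim_left_bound[where K="- \<phi>m l"]) (use amD in auto)
    then have tm: "((\<lambda>m. - \<phi>m m) \<longlongrightarrow> Sup ((\<lambda>m. - \<phi>m m) ` ({..<l} \<inter> {0..}))) (at_left l)" unfolding filt .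
    define I where "I = Sup ((\<lambda>m. - \<phi>m m) ` ({..<l} \<inter> {0..}))"
    have tm': "(\<phi>m \<longlongrightarrow> - I) (at_left l)"
      using tendsto_minus[OF tm] unfolding I_def by simp
    have Lym: "Lim (at_left l) \<phi>m = - I"
      by (rule tendsto_Lim[OF _ tm']) (simp add: trivial_limit_at_left_real)
    have bddm: "bdd_above ((\<lambda>m. - \<phi>m m) ` ({..<l} \<inter> {0..}))" by (rule bdd_aboveI[of _ "- \<phi>m l"]) (use amD in auto)
    have lo': "- I \<le> \<phi>m m" if "0 \<le> m" "m < l" for m
    proof -
      have "- \<phi>m m \<le> I" unfolding I_def using that by (intro cSup_upper[OF _ bddm]) auto
      then show ?thesis by simp
    qed
    have hi': "\<phi>m m \<le> - I" if "l \<le> m" for m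
    proof -
      have "I \<le> - \<phi>m m" unfolding I_def by (rule cSup_least[OF ne']) (use amD that lpos in force)
      then show ?thesis by simp
    qed
    have ym: "- I \<le> 0" using lo'[of 0] lpos nm by force
    have Hym: "H (- I) = ereal (- I * Am l - C l)"
      by (rule HvalM[OF ym l]) (use lo' hi' in auto)
    show "ereal (Am l) \<le> ereal_right_deriv H (Lim (at_left l) \<phi>m)"
      unfolding Lym by (rule right_deriv_ge[OF conv Hym]) (rule lowM'[OF l])
  qed
  show "ereal_convex_on UNIV H
    \<and> (\<forall>x>0. if (\<exists>l\<ge>0. x < \<phi>p l)
               then H x = ereal (x * Ap (\<psi>p x) - C (\<psi>p x))
               else ((\<lambda>l. ereal (x * Ap l - C l)) \<longlongrightarrow> H x) at_top)
    \<and> (\<forall>x<0. if (\<exists>l\<ge>0. \<phi>m l \<le> x)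
               then H x = ereal (x * Am (\<psi>m x) - C (\<psi>m x))
               else ((\<lambda>l. ereal (x * Am l - C l)) \<longlongrightarrow> H x) at_top)
    \<and> (\<forall>l\<ge>0. ereal (Ap l) \<le> ereal_right_deriv H (Lim (at_right l) \<phi>p)
             \<and> ereal_left_deriv H (Lim (at_right l) \<phi>m) \<le> ereal (Am l))
    \<and> (\<forall>l>0. ereal_left_deriv H (Lim (at_left l) \<phi>p) \<le> ereal (Ap l)
             \<and> ereal (Am l) \<le> ereal_right_deriv H (Lim (at_left l) \<phi>m))"
    using conv P2 P3 P4 P5 by blast
  show "\<forall>l\<ge>0. H (\<phi>p l) = ereal (\<phi>p l * Ap l - C l) \<and> H (\<phi>m l) = ereal (\<phi>m l * Am l - C l)"
  proof (intro allI impI conjI)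
    fix l :: real assume l: "0 \<le> l"
    show "H (\<phi>p l) = ereal (\<phi>p l * Ap l - C l)"
      by (rule HvalP) (use l pp mpD in auto)
    show "H (\<phi>m l) = ereal (\<phi>m l * Am l - C l)"
      by (rule HvalM) (use l nm amD in auto)
  qed
qed



theorem lemma2p5:
  fixes \<phi>p \<phi>m F :: "real \<Rightarrow> real" and \<nu> :: "real measure"
    and \<Delta> \<Sigma> \<delta> Ap Am C \<Gamma> \<psi>p \<psi>m :: "real \<Rightarrow> real" and H :: "real \<Rightarrow> ereal"
  assumes phip_mono: "mono_on {0..} \<phi>p" and phip_nonneg: "\<forall>l\<ge>0. 0 \<le> \<phi>p l"
    and phim_anti: "antimono_on {0..} \<phi>m" and phim_nonpos: "\<forall>l\<ge>0. \<phi>m l \<le> 0"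
    and F_convex: "convex_on {0..} F" and F_mono: "mono_on {0..} F"
    and Delta_finite: "\<forall>l>0. (\<integral>\<^sup>+ m \<in> {0..l}. (inverse (2 * ennreal (\<phi>p m))
                                  + inverse (2 * ennreal \<bar>\<phi>m m\<bar>)) \<partial>lborel) < \<infinity>"
    and Delta_def: "\<Delta> \<equiv> \<lambda>l. enn2real (\<integral>\<^sup>+ m \<in> {0..l}. (inverse (2 * ennreal (\<phi>p m))
                                  + inverse (2 * ennreal \<bar>\<phi>m m\<bar>)) \<partial>lborel)"
    and Delta_lim: "filterlim \<Delta> at_top at_top"
    and psip_def: "\<psi>p \<equiv> \<lambda>x. Inf {l. 0 \<le> l \<and> x < \<phi>p l}"
    and psim_def: "\<psi>m \<equiv> \<lambda>x. Inf {l. 0 \<le> l \<and> \<phi>m l \<le> x}"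
    and nu_prob: "prob_space \<nu>" and nu_sets: "sets \<nu> = sets borel"
    and nu_tail: "\<forall>l\<ge>0. measure \<nu> {l..} = exp (- \<Delta> l)"
    and F'_integrable: "set_integrable \<nu> {0..} (rderiv F)"
    and Sigma_def: "\<Sigma> \<equiv> \<lambda>l. (\<integral>m\<in>{l..}. rderiv F m \<partial>\<nu>) / measure \<nu> {l..}"
    and delta_def: "\<delta> \<equiv> \<lambda>l. \<Sigma> l - rderiv F l"
    and Ap_def: "Ap \<equiv> \<lambda>l. \<Sigma> 0 + (\<integral>m\<in>{0..l}. \<delta> m / \<phi>p m \<partial>lborel)"
    and Am_def: "Am \<equiv> \<lambda>l. - \<Sigma> 0 - (\<integral>m\<in>{0..l}. \<delta> m / \<bar>\<phi>m m\<bar> \<partial>lborel)"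
    and C_def: "C \<equiv> \<lambda>l. - F 0 + (\<integral>m\<in>{0..l}. \<delta> m \<partial>lborel)"
    and H_def: "H \<equiv> \<lambda>x. if x > 0 then (SUP l\<in>{0<..}. ereal (x * Ap l - C l))
                      else if x = 0 then ereal (F 0)
                      else (SUP l\<in>{0<..}. ereal (x * Am l - C l))"
    and Gamma_def: "\<Gamma> \<equiv> \<lambda>l. (\<integral>m\<in>{0..l}. (Ap m - Am m) / 2 \<partial>lborel)"
  shows "ereal_convex_on UNIV H
    \<and> (\<forall>x>0. if (\<exists>l\<ge>0. x < \<phi>p l)
               then H x = ereal (x * Ap (\<psi>p x) - C (\<psi>p x))
               else ((\<lambda>l. ereal (x * Ap l - C l)) \<longlongrightarrow> H x) at_top)
    \<and> (\<forall>x<0. if (\<exists>l\<ge>0. \<phi>m l \<le> x)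
               then H x = ereal (x * Am (\<psi>m x) - C (\<psi>m x))
               else ((\<lambda>l. ereal (x * Am l - C l)) \<longlongrightarrow> H x) at_top)
    \<and> (\<forall>l\<ge>0. ereal (Ap l) \<le> ereal_right_deriv H (Lim (at_right l) \<phi>p)
             \<and> ereal_left_deriv H (Lim (at_right l) \<phi>m) \<le> ereal (Am l))
    \<and> (\<forall>l>0. ereal_left_deriv H (Lim (at_left l) \<phi>p) \<le> ereal (Ap l)
             \<and> ereal (Am l) \<le> ereal_right_deriv H (Lim (at_left l) \<phi>m))
    \<and> (\<forall>l\<ge>0. ereal (F l) = ereal (\<Gamma> l) + H (\<phi>p l) - ereal (\<phi>p l * Ap l)
             \<and> ereal (F l) = ereal (\<Gamma> l) + H (\<phi>m l) - ereal (\<phi>m l * Am l))"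
proof -
  note P1 = main_part1[OF phip_mono phip_nonneg phim_anti phim_nonpos F_convex F_mono Delta_finite
      Delta_def Delta_lim nu_prob nu_sets nu_tail F'_integrable Sigma_def delta_def Ap_def Am_def C_def Gamma_def]
  note P2 = main_part2[OF P1(1) P1(2) P1(3) P1(4) P1(5) P1(6) H_def psip_def psim_def]
  have fin: "\<forall>l\<ge>0. ereal (F l) = ereal (\<Gamma> l) + H (\<phi>p l) - ereal (\<phi>p l * Ap l)
             \<and> ereal (F l) = ereal (\<Gamma> l) + H (\<phi>m l) - ereal (\<phi>m l * Am l)"
  proof (intro allI impI conjI)
    fix l :: real assume l: "0 \<le> l"
    have Fl: "F l = \<Gamma> l - C l" using P1(7) l by simp
    have h1: "H (\<phi>p l) = ereal (\<phi>p l * Ap l - C l)" and h2: "H (\<phi>m l) = ereal (\<phi>m l * Am l - C l)"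
      using P2(2) l by auto
    show "ereal (F l) = ereal (\<Gamma> l) + H (\<phi>p l) - ereal (\<phi>p l * Ap l)"
      unfolding h1 Fl by simp
    show "ereal (F l) = ereal (\<Gamma> l) + H (\<phi>m l) - ereal (\<phi>m l * Am l)"
      unfolding h2 Fl by simp
  qed
  show ?thesis using P2(1) fin by blast
qed



end
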